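(* Let $X_t=\sum_{i=0}^\infty a_i\varepsilon_{t-i}$ with $a_0=1$, $\sum_ia_i^2<\infty$, where $(\varepsilon_k)$ are iid with mean $0$, finite positive variance, and density $f_\varepsilon$. Let $Y_n=X_{n+1}-\varepsilon_{n+1}$ and let $Y_n^*$ be $Y_n$ with $\varepsilon_0$ replaced by $\varepsilon_0^*$, an independent copy. Let $\gamma\ge0$, and assume $\mathbb E(|\varepsilon_1|^{2+\gamma})<\infty$ and $\kappa:=\int_{\mathbb R}|f'_\varepsilon(u)|^2(1+|u|)^\gamma du<\infty$. Then $\|\rho_{w_\gamma}(Y_n,Y_n^* )\|=O(|a_{n+1}|)$.
   Context: $w_\gamma(du)=(1+|u|)^\gamma du$. With $h(\theta,y)=f_\varepsilon(\theta-y)$ (the conditional density of $X_{n+1}$ given $Y_n=y$), $H_{w_\gamma}(y)=\int_{\mathbb R}|\partial h(\theta,y)/\partial y|^2w_\gamma(d\theta)=\int|f'_\varepsilon(\theta-y)|^2(1+|\theta|)^\gamma d\theta$ and $\rho_{w_\gamma}(u,v)=|\int_u^vH_{w_\gamma}^{1/2}(y)dy|$. $\|\xi\|=(\mathbb E\xi^2)^{1/2}$. *)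

theory Defs
  imports "HOL-Probability.Probability"
begin

text \<open>Weight w_gamma(du) = (1+|u|)^gamma du; with h(theta,y) = f(theta - y),
  H_w(y) = int |f'(theta - y)|^2 (1+|theta|)^gamma d theta.\<close>
definition H_w :: "real \<Rightarrow> (real \<Rightarrow> real) \<Rightarrow> real \<Rightarrow> real" where
  "H_w \<gamma> f' y = (LINT \<theta>|lborel. (f' (\<theta> - y))\<^sup>2 * (1 + \<bar>\<theta>\<bar>) powr \<gamma>)"

definition rho_w :: "real \<Rightarrow> (real \<Rightarrow> real) \<Rightarrow> real \<Rightarrow> real \<Rightarrow> real" where
  "rho_w \<gamma> f' u v = \<bar>interval_lebesgue_integral lborel (ereal u) (ereal v) (\<lambda>y. sqrt (H_w \<gamma> f' y))\<bar>"

text \<open>Squared L2 norm E(xi^2) of a random variable (as an extended nonnegative value,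
  so that non-square-integrability is not silently mapped to 0).\<close>
definition L2sq :: "'a measure \<Rightarrow> ('a \<Rightarrow> real) \<Rightarrow> ennreal" where
  "L2sq M \<xi> = (\<integral>\<^sup>+ \<omega>. ennreal ((\<xi> \<omega>)\<^sup>2) \<partial>M)"

end

theory Submission
  imports Defs
begin

lemma (in prob_space) indep_sets_reindex:
  assumes "indep_sets F I" "inj_on h J" "h ` J \<subseteq> I"
  shows "indep_sets (\<lambda>j. F (h j)) J"
  unfolding indep_sets_def
proof (intro conjI ballI allI impI subsetI)
  fix j x assume "j \<in> J" "x \<in> F (h j)"
  then show "x \<in> events" using assms unfolding indep_sets_def by auto
next
  fix K A assume K: "K \<subseteq> J" "K \<noteq> {}" "finite K" and A: "A \<in> Pi K (\<lambda>j. F (h j))"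
  define B where "B i = A (inv_into K h i)" for i
  have inj: "inj_on h K" using assms(2) K(1) inj_on_subset by blast
  have B: "B \<in> Pi (h ` K) F" using A inj by (auto simp: B_def Pi_def)
  have eq1: "(\<Inter>j\<in>K. A j) = (\<Inter>i\<in>h ` K. B i)" using inj by (auto simp: B_def)
  have eq2: "(\<Prod>j\<in>K. prob (A j)) = (\<Prod>i\<in>h ` K. prob (B i))"
  proof -
    have "(\<Prod>i\<in>h ` K. prob (B i)) = (\<Prod>j\<in>K. prob (B (h j)))"
      using prod.reindex[OF inj, of "\<lambda>i. prob (B i)"] by (simp add: comp_def)
    also have "\<dots> = (\<Prod>j\<in>K. prob (A j))" using inj by (intro prod.cong) (auto simp: B_def)
    finally show ?thesis by simp
  qed
  have "prob (\<Inter>i\<in>h ` K. B i) = (\<Prod>i\<in>h ` K. prob (B i))"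
  proof -
    have "h ` K \<subseteq> I" using K(1) assms(3) by auto
    moreover have "h ` K \<noteq> {}" "finite (h ` K)" using K by auto
    ultimately show ?thesis using assms(1) B unfolding indep_sets_def by blast
  qed
  then show "prob (\<Inter>j\<in>K. A j) = (\<Prod>j\<in>K. prob (A j))" using eq1 eq2 by metis
qed

lemma (in prob_space) indep_vars_reindex:
  assumes "indep_vars M' X I" "inj_on h J" "h ` J \<subseteq> I"
  shows "indep_vars (\<lambda>j. M' (h j)) (\<lambda>j. X (h j)) J"
  using assms indep_sets_reindex[of "\<lambda>i. { X i -` A \<inter> space M | A. A \<in> sets (M' i)}" I h J]
  unfolding indep_vars_def2 by auto

lemma H_w_bound:
  fixes f' :: "real \<Rightarrow> real" and \<gamma> y :: real
  assumes gamma: "\<gamma> \<ge> 0"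
    and kappa: "integrable lborel (\<lambda>u. (f' u)\<^sup>2 * (1 + \<bar>u\<bar>) powr \<gamma>)"
  shows "H_w \<gamma> f' y \<le> (LINT u|lborel. (f' u)\<^sup>2 * (1 + \<bar>u\<bar>) powr \<gamma>) * (1 + \<bar>y\<bar>) powr \<gamma>"
proof -
  have "H_w \<gamma> f' y = (LINT x|lborel. (f' ((y + 1 * x) - y))\<^sup>2 * (1 + \<bar>y + 1 * x\<bar>) powr \<gamma>)"
    unfolding H_w_def using lborel_integral_real_affine[of 1 "\<lambda>\<theta>. (f' (\<theta> - y))\<^sup>2 * (1 + \<bar>\<theta>\<bar>) powr \<gamma>" y]
    by simp
  also have "\<dots> = (LINT x|lborel. (f' x)\<^sup>2 * (1 + \<bar>y + x\<bar>) powr \<gamma>)" by simp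
  also have "\<dots> \<le> (LINT x|lborel. (1 + \<bar>y\<bar>) powr \<gamma> * ((f' x)\<^sup>2 * (1 + \<bar>x\<bar>) powr \<gamma>))"
  proof (rule integral_mono')
    show "integrable lborel (\<lambda>x. (1 + \<bar>y\<bar>) powr \<gamma> * ((f' x)\<^sup>2 * (1 + \<bar>x\<bar>) powr \<gamma>))"
      using kappa by (rule integrable_mult_right)
  next
    fix x :: real
    have "(1 + \<bar>y + x\<bar>) powr \<gamma> \<le> ((1 + \<bar>y\<bar>) * (1 + \<bar>x\<bar>)) powr \<gamma>"
      using gamma by (intro powr_mono2) (auto simp: algebra_simps abs_triangle_ineq[THEN order_trans])
    also have "\<dots> = (1 + \<bar>y\<bar>) powr \<gamma> * (1 + \<bar>x\<bar>) powr \<gamma>" by (simp add: powr_mult)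
    finally have "(1 + \<bar>y + x\<bar>) powr \<gamma> \<le> (1 + \<bar>y\<bar>) powr \<gamma> * (1 + \<bar>x\<bar>) powr \<gamma>" .
    then show "(f' x)\<^sup>2 * (1 + \<bar>y + x\<bar>) powr \<gamma> \<le> (1 + \<bar>y\<bar>) powr \<gamma> * ((f' x)\<^sup>2 * (1 + \<bar>x\<bar>) powr \<gamma>)"
      by (metis mult.left_commute mult_left_mono zero_le_power2)
    show "0 \<le> (1 + \<bar>y\<bar>) powr \<gamma> * ((f' x)\<^sup>2 * (1 + \<bar>x\<bar>) powr \<gamma>)" by simp
  qed
  also have "\<dots> = (LINT u|lborel. (f' u)\<^sup>2 * (1 + \<bar>u\<bar>) powr \<gamma>) * (1 + \<bar>y\<bar>) powr \<gamma>"
    by simp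
  finally show ?thesis .
qed

lemma set_integral_Ioo_bound:
  fixes g :: "real \<Rightarrow> real"
  assumes "u \<le> v" "B \<ge> 0" "\<And>x. u < x \<Longrightarrow> x < v \<Longrightarrow> \<bar>g x\<bar> \<le> B"
  shows "\<bar>LINT x:{u<..<v}|lborel. g x\<bar> \<le> (v - u) * B"
proof -
  have "\<bar>LINT x:{u<..<v}|lborel. g x\<bar> \<le> (LINT x|lborel. norm (indicator {u<..<v} x *\<^sub>R g x))"
    unfolding set_lebesgue_integral_def using integral_norm_bound by (metis real_norm_def)
  also have "\<dots> \<le> (LINT x|lborel. indicator {u<..<v} x * B)"
  proof (rule integral_mono')
    show "integrable lborel (\<lambda>x. indicator {u<..<v} x * B)"
      using assms(1) by (intro integrable_mult_left) (simp add: integrable_indicator_iff)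
    fix x show "norm (indicator {u<..<v} x *\<^sub>R g x) \<le> indicator {u<..<v} x * B"
      using assms by (auto simp: indicator_def)
    show "0 \<le> indicator {u<..<v} x * B" using assms by auto
  qed
  also have "\<dots> = (v - u) * B" using assms by simp
  finally show ?thesis .
qed

lemma rho_w_bound:
  fixes f' :: "real \<Rightarrow> real" and \<gamma> u v :: real
  assumes gamma: "\<gamma> \<ge> 0"
    and kappa: "integrable lborel (\<lambda>u. (f' u)\<^sup>2 * (1 + \<bar>u\<bar>) powr \<gamma>)"
  shows "rho_w \<gamma> f' u v \<le> sqrt (LINT u|lborel. (f' u)\<^sup>2 * (1 + \<bar>u\<bar>) powr \<gamma>) * \<bar>v - u\<bar> * (1 + \<bar>u\<bar> + \<bar>v\<bar>) powr (\<gamma> / 2)"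
proof -
  define \<kappa> where "\<kappa> = (LINT u|lborel. (f' u)\<^sup>2 * (1 + \<bar>u\<bar>) powr \<gamma>)"
  have k0: "\<kappa> \<ge> 0" unfolding \<kappa>_def by (intro integral_nonneg_AE) auto
  define B where "B = sqrt \<kappa> * (1 + \<bar>u\<bar> + \<bar>v\<bar>) powr (\<gamma> / 2)"
  have B0: "B \<ge> 0" using k0 by (simp add: B_def)
  have bnd: "\<bar>sqrt (H_w \<gamma> f' y)\<bar> \<le> B" if "\<bar>y\<bar> \<le> \<bar>u\<bar> + \<bar>v\<bar>" for y
  proof -
    have H0: "H_w \<gamma> f' y \<ge> 0" unfolding H_w_def by (intro integral_nonneg_AE) auto
    have "H_w \<gamma> f' y \<le> \<kappa> * (1 + \<bar>y\<bar>) powr \<gamma>" unfolding \<kappa>_def by (rule H_w_bound[OF gamma kappa])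
    also have "\<dots> \<le> \<kappa> * (1 + \<bar>u\<bar> + \<bar>v\<bar>) powr \<gamma>"
      using that gamma k0 by (intro mult_left_mono powr_mono2) auto
    finally have "sqrt (H_w \<gamma> f' y) \<le> sqrt (\<kappa> * (1 + \<bar>u\<bar> + \<bar>v\<bar>) powr \<gamma>)" by simp
    also have "\<dots> = B"
    proof -
      have P: "1 + \<bar>u\<bar> + \<bar>v\<bar> > 0" by simp
      have "sqrt ((1 + \<bar>u\<bar> + \<bar>v\<bar>) powr \<gamma>) = ((1 + \<bar>u\<bar> + \<bar>v\<bar>) powr \<gamma>) powr (1/2)"
        by (simp add: powr_half_sqrt)
      also have "\<dots> = (1 + \<bar>u\<bar> + \<bar>v\<bar>) powr (\<gamma> / 2)" by (simp add: powr_powr)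
      finally show ?thesis by (simp add: real_sqrt_mult B_def)
    qed
    finally show ?thesis using H0 by simp
  qed
  show ?thesis
  proof (cases "u \<le> v")
    case True
    have "rho_w \<gamma> f' u v = \<bar>LINT x:{u<..<v}|lborel. sqrt (H_w \<gamma> f' x)\<bar>"
      unfolding rho_w_def interval_lebesgue_integral_def using True by simp
    also have "\<dots> \<le> (v - u) * B" using True B0 bnd by (intro set_integral_Ioo_bound) auto
    finally show ?thesis using True by (simp add: B_def \<kappa>_def mult_ac)
  next
    case False
    have "rho_w \<gamma> f' u v = \<bar>LINT x:{v<..<u}|lborel. sqrt (H_w \<gamma> f' x)\<bar>"
      unfolding rho_w_def interval_lebesgue_integral_def using False by simp
    also have "\<dots> \<le> (u - v) * B" using False B0 bnd by (intro set_integral_Ioo_bound) auto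
    finally show ?thesis using False by (simp add: B_def \<kappa>_def mult_ac)
  qed
qed

definition psi :: "real \<Rightarrow> real \<Rightarrow> real" where
  "psi p t = (1 + t\<^sup>2) powr (p / 2)"
definition psi1 :: "real \<Rightarrow> real \<Rightarrow> real" where
  "psi1 p t = p * t * (1 + t\<^sup>2) powr (p / 2 - 1)"
definition psi2 :: "real \<Rightarrow> real \<Rightarrow> real" where
  "psi2 p t = p * (1 + t\<^sup>2) powr (p / 2 - 1) + p * (p - 2) * t\<^sup>2 * (1 + t\<^sup>2) powr (p / 2 - 2)"

lemma psi_deriv: "(psi p has_real_derivative psi1 p t) (at t)"
proof -
  have pos: "1 + t\<^sup>2 > 0" by (simp add: add_pos_nonneg)
  have "((\<lambda>t. (1 + t\<^sup>2) powr (p / 2)) has_real_derivative (p/2) * (1 + t\<^sup>2) powr (p/2 - of_nat 1) * (2 * t)) (at t)"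
    by (rule DERIV_fun_powr) (auto intro!: derivative_eq_intros simp: add_pos_nonneg)
  then show ?thesis unfolding psi_def psi1_def by (simp add: field_simps)
qed

lemma psi1_deriv: "(psi1 p has_real_derivative psi2 p t) (at t)"
proof -
  have pos: "1 + t\<^sup>2 > 0" by (simp add: add_pos_nonneg)
  have d: "((\<lambda>t. (1 + t\<^sup>2) powr (p / 2 - 1)) has_real_derivative (p/2 - 1) * (1 + t\<^sup>2) powr (p/2 - 1 - of_nat 1) * (2 * t)) (at t)"
    by (rule DERIV_fun_powr) (auto intro!: derivative_eq_intros simp: add_pos_nonneg)
  have "((\<lambda>t. p * t * (1 + t\<^sup>2) powr (p / 2 - 1)) has_real_derivative
     p * (1 + t\<^sup>2) powr (p / 2 - 1) + p * t * ((p/2 - 1) * (1 + t\<^sup>2) powr (p/2 - 1 - of_nat 1) * (2 * t))) (at t)"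
    by (rule derivative_eq_intros refl d | simp)+
  moreover have "p * (1 + t\<^sup>2) powr (p / 2 - 1) + p * t * ((p/2 - 1) * (1 + t\<^sup>2) powr (p/2 - 1 - of_nat 1) * (2 * t))
     = psi2 p t"
  proof -
    have e: "p/2 - 1 - of_nat 1 = p / 2 - 2" by simp
    have "p * t * ((p/2 - 1) * (1 + t\<^sup>2) powr (p/2 - 2) * (2 * t)) = p * ((p/2 - 1) * 2) * (t * t) * (1 + t\<^sup>2) powr (p/2 - 2)"
      by (simp add: mult_ac)
    also have "(p/2 - 1) * 2 = p - 2" by simp
    finally show ?thesis unfolding psi2_def e by (simp add: power2_eq_square mult_ac)
  qed
  ultimately show ?thesis unfolding psi1_def by simp
qed

lemma psi_pos: "psi p t > 0"
proof -
  have "1 + t\<^sup>2 \<noteq> 0" by (smt (verit) zero_le_power2)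
  then show ?thesis by (simp add: psi_def)
qed

lemma psi2_le:
  assumes "p \<ge> 2"
  shows "psi2 p t \<le> p * (p - 1) * (1 + t\<^sup>2) powr (p / 2 - 1)"
proof -
  have pos: "1 + t\<^sup>2 > 0" by (simp add: add_pos_nonneg)
  have "t\<^sup>2 * (1 + t\<^sup>2) powr (p / 2 - 2) \<le> (1 + t\<^sup>2) * (1 + t\<^sup>2) powr (p / 2 - 2)"
    by (intro mult_right_mono) auto
  also have "\<dots> = (1 + t\<^sup>2) powr (p / 2 - 1)"
  proof -
    have "(1 + t\<^sup>2) powr (p / 2 - 1) = (1 + t\<^sup>2) powr (1 + (p / 2 - 2))" by simp
    also have "\<dots> = (1 + t\<^sup>2) powr 1 * (1 + t\<^sup>2) powr (p / 2 - 2)" by (rule powr_add)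
    also have "\<dots> = (1 + t\<^sup>2) * (1 + t\<^sup>2) powr (p / 2 - 2)" using pos by simp
    finally show ?thesis by simp
  qed
  finally have "p * (p - 2) * (t\<^sup>2 * (1 + t\<^sup>2) powr (p / 2 - 2)) \<le> p * (p - 2) * (1 + t\<^sup>2) powr (p / 2 - 1)"
    using assms by (intro mult_left_mono) auto
  then show ?thesis unfolding psi2_def by (simp add: algebra_simps)
qed

lemma psi_taylor:
  assumes p: "p \<ge> 2"
  shows "psi p (x + y) \<le> psi p x + psi1 p x * y
     + p * (p - 1) / 2 * 2 powr (p / 2 - 1) * psi p x * ((1 + y\<^sup>2) powr (p / 2 - 1) * y\<^sup>2)"
proof (cases "y = 0")
  case True then show ?thesis by simp
next
  case False
  define diff where "diff m = (if m = 0 then psi p else if m = 1 then psi1 p else psi2 p)" for m :: nat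
  have D: "\<forall>m t. m < 2 \<and> min x (x+y) \<le> t \<and> t \<le> max x (x+y) \<longrightarrow> DERIV (diff m) t :> diff (Suc m) t"
    by (auto simp: diff_def psi_deriv psi1_deriv less_2_cases_iff)
  obtain t where t: "(if x + y < x then x + y < t \<and> t < x else x < t \<and> t < x + y)"
    and eq: "psi p (x + y) = (\<Sum>m<2. (diff m x / fact m) * ((x + y) - x)^m) + (diff 2 t / fact 2) * ((x + y) - x)^2"
    using Taylor[of 2 diff "psi p" "min x (x+y)" "max x (x+y)" x "x + y", OF _ _ D] False
    by (auto simp: diff_def)
  have eq2: "psi p (x + y) = psi p x + psi1 p x * y + psi2 p t / 2 * y\<^sup>2"
    using eq by (simp add: diff_def numeral_2_eq_2)
  have tb: "\<bar>t\<bar> \<le> \<bar>x\<bar> + \<bar>y\<bar>" using t by (auto split: if_splits)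
  have q: "p / 2 - 1 \<ge> 0" using p by simp
  have "1 + t\<^sup>2 \<le> 2 * ((1 + x\<^sup>2) * (1 + y\<^sup>2))"
  proof -
    have "t\<^sup>2 \<le> (\<bar>x\<bar> + \<bar>y\<bar>)\<^sup>2" using tb by (metis abs_ge_zero abs_le_square_iff abs_of_nonneg add_nonneg_nonneg)
    also have "\<dots> \<le> 2 * x\<^sup>2 + 2 * y\<^sup>2"
    proof -
      have h: "0 \<le> (\<bar>x\<bar> - \<bar>y\<bar>)\<^sup>2" by simp
      have "(\<bar>x\<bar> + \<bar>y\<bar>)\<^sup>2 = x\<^sup>2 + y\<^sup>2 + 2 * \<bar>x\<bar> * \<bar>y\<bar>" by (simp add: power2_sum)
      moreover have "(\<bar>x\<bar> - \<bar>y\<bar>)\<^sup>2 = x\<^sup>2 + y\<^sup>2 - 2 * \<bar>x\<bar> * \<bar>y\<bar>" by (simp add: power2_diff)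
      ultimately show ?thesis using h by linarith
    qed
    also have "\<dots> \<le> 1 + 2 * x\<^sup>2 + 2 * y\<^sup>2 + 2 * x\<^sup>2 * y\<^sup>2" by simp
    finally show ?thesis by (simp add: algebra_simps)
  qed
  then have "(1 + t\<^sup>2) powr (p / 2 - 1) \<le> (2 * ((1 + x\<^sup>2) * (1 + y\<^sup>2))) powr (p / 2 - 1)"
    using q by (intro powr_mono2) (auto simp: add_pos_nonneg)
  also have "\<dots> = 2 powr (p / 2 - 1) * (1 + x\<^sup>2) powr (p / 2 - 1) * (1 + y\<^sup>2) powr (p / 2 - 1)"
    by (simp add: powr_mult add_pos_nonneg)
  also have "(1 + x\<^sup>2) powr (p / 2 - 1) \<le> psi p x"
    unfolding psi_def by (intro powr_mono) auto
  finally have "(1 + t\<^sup>2) powr (p / 2 - 1) \<le> 2 powr (p / 2 - 1) * psi p x * (1 + y\<^sup>2) powr (p / 2 - 1)"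
    by (simp add: mult_left_mono mult_right_mono)
  then have "psi2 p t \<le> p * (p - 1) * (2 powr (p / 2 - 1) * psi p x * (1 + y\<^sup>2) powr (p / 2 - 1))"
    using psi2_le[OF p, of t] p by (smt (verit) mult_left_mono mult_nonneg_nonneg)
  then have "psi2 p t / 2 * y\<^sup>2 \<le> p * (p - 1) * (2 powr (p / 2 - 1) * psi p x * (1 + y\<^sup>2) powr (p / 2 - 1)) / 2 * y\<^sup>2"
    by (intro mult_right_mono divide_right_mono) auto
  then show ?thesis using eq2 by (simp add: algebra_simps)
qed

lemma (in prob_space) indep_blocks:
  assumes ind: "indep_vars (\<lambda>_. borel) X I" and AB: "A \<inter> B = {}" "A \<subseteq> I" "B \<subseteq> I"
    and F: "F \<in> borel_measurable (PiM A (\<lambda>_. borel))" and G: "G \<in> borel_measurable (PiM B (\<lambda>_. borel))"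
  shows "indep_var borel (\<lambda>\<omega>. F (restrict (\<lambda>i. X i \<omega>) A)) borel (\<lambda>\<omega>. G (restrict (\<lambda>i. X i \<omega>) B))"
  using indep_var_compose[OF indep_var_restrict[OF ind AB] F G] by (simp add: comp_def)

lemma (in prob_space) indep_prefix_single:
  fixes Z :: "nat \<Rightarrow> 'a \<Rightarrow> real"
  assumes ind: "indep_vars (\<lambda>_. borel) Z UNIV"
    and F[measurable]: "F \<in> borel_measurable borel" and G[measurable]: "G \<in> borel_measurable borel"
  shows "indep_var borel (\<lambda>\<omega>. F (\<Sum>j<N. c j * Z j \<omega>)) borel (\<lambda>\<omega>. G (Z N \<omega>))"
proof -
  have "indep_var borel (\<lambda>\<omega>. (\<lambda>x. F (\<Sum>j<N. c j * x j)) (restrict (\<lambda>i. Z i \<omega>) {..<N}))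
     borel (\<lambda>\<omega>. (\<lambda>x. G (x N)) (restrict (\<lambda>i. Z i \<omega>) {N}))"
    by (rule indep_blocks[OF ind]) auto
  then show ?thesis by simp
qed

lemma psi1_abs: fixes p t :: real assumes "p \<ge> 0" shows "\<bar>psi1 p t\<bar> \<le> p * psi p t"
proof -
  have pos: "1 + t\<^sup>2 > 0" by (simp add: add_pos_nonneg)
  have "\<bar>t\<bar> \<le> 1 + t\<^sup>2"
  proof (cases "\<bar>t\<bar> \<le> 1")
    case True then show ?thesis by (smt (verit) zero_le_power2)
  next
    case False
    have "\<bar>t\<bar> * 1 \<le> \<bar>t\<bar> * \<bar>t\<bar>" using False by (intro mult_left_mono) auto
    also have "\<bar>t\<bar> * \<bar>t\<bar> = t\<^sup>2" by (simp add: power2_eq_square abs_mult_self_eq)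
    finally show ?thesis by simp
  qed
  then have "\<bar>t\<bar> * (1 + t\<^sup>2) powr (p / 2 - 1) \<le> (1 + t\<^sup>2) * (1 + t\<^sup>2) powr (p / 2 - 1)"
    by (intro mult_right_mono) auto
  also have "\<dots> = (1 + t\<^sup>2) powr (p / 2)"
  proof -
    have "(1 + t\<^sup>2) powr (p / 2) = (1 + t\<^sup>2) powr (1 + (p / 2 - 1))" by simp
    also have "\<dots> = (1 + t\<^sup>2) powr 1 * (1 + t\<^sup>2) powr (p / 2 - 1)" by (rule powr_add)
    finally show ?thesis using pos by simp
  qed
  finally have "\<bar>t\<bar> * (1 + t\<^sup>2) powr (p / 2 - 1) \<le> psi p t" unfolding psi_def .
  then show ?thesis unfolding psi1_def using assms
    by (simp add: abs_mult mult.assoc mult_left_mono)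
qed

lemma powr_half_split:
  fixes p z :: real
  assumes "p \<ge> 2"
  shows "(1 + z\<^sup>2) powr (p / 2) \<le> 2 powr (p / 2) * (1 + \<bar>z\<bar> powr p)"
proof (cases "z\<^sup>2 \<le> 1")
  case True
  have "(1 + z\<^sup>2) powr (p / 2) \<le> 2 powr (p / 2)" using True assms by (intro powr_mono2) auto
  also have "\<dots> \<le> 2 powr (p / 2) * (1 + \<bar>z\<bar> powr p)" by simp
  finally show ?thesis .
next
  case False
  have "z \<noteq> 0" using False by auto
  then have za: "\<bar>z\<bar> > 0" by simp
  have "(1 + z\<^sup>2) powr (p / 2) \<le> (2 * \<bar>z\<bar> powr 2) powr (p / 2)"
    using False assms za by (intro powr_mono2) (auto simp: powr_numeral)
  also have "\<dots> = 2 powr (p / 2) * (\<bar>z\<bar> powr 2) powr (p / 2)" by (intro powr_mult)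
  also have "\<dots> = 2 powr (p / 2) * \<bar>z\<bar> powr p" by (simp only: powr_powr) simp
  also have "\<dots> \<le> 2 powr (p / 2) * (1 + \<bar>z\<bar> powr p)" by simp
  finally show ?thesis .
qed

lemma h_bound:
  fixes p c z A :: real
  assumes p: "p \<ge> 2" and cA: "\<bar>c\<bar> \<le> A"
  shows "(1 + (c * z)\<^sup>2) powr (p / 2 - 1) * (c * z)\<^sup>2 \<le> c\<^sup>2 * ((1 + A\<^sup>2) powr (p / 2 - 1) * 2 powr (p / 2) * (1 + \<bar>z\<bar> powr p))"
proof -
  have q: "p / 2 - 1 \<ge> 0" using p by simp
  have c2: "c\<^sup>2 \<le> A\<^sup>2" using power_mono[OF cA abs_ge_zero, of 2] by simp
  have "1 + (c * z)\<^sup>2 \<le> (1 + A\<^sup>2) * (1 + z\<^sup>2)"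
  proof -
    have "(c * z)\<^sup>2 = c\<^sup>2 * z\<^sup>2" by (simp add: power_mult_distrib)
    also have "\<dots> \<le> A\<^sup>2 * z\<^sup>2" using c2 by (intro mult_right_mono) auto
    then show ?thesis by (simp add: algebra_simps) (smt (verit) zero_le_power2)
  qed
  then have "(1 + (c * z)\<^sup>2) powr (p / 2 - 1) \<le> ((1 + A\<^sup>2) * (1 + z\<^sup>2)) powr (p / 2 - 1)"
    using q by (intro powr_mono2) (auto simp: add_pos_nonneg)
  also have "\<dots> = (1 + A\<^sup>2) powr (p / 2 - 1) * (1 + z\<^sup>2) powr (p / 2 - 1)"
    by (simp add: powr_mult add_pos_nonneg)
  finally have h1: "(1 + (c * z)\<^sup>2) powr (p / 2 - 1) \<le> (1 + A\<^sup>2) powr (p / 2 - 1) * (1 + z\<^sup>2) powr (p / 2 - 1)" .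
  have h2: "(1 + z\<^sup>2) powr (p / 2 - 1) * z\<^sup>2 \<le> 2 powr (p / 2) * (1 + \<bar>z\<bar> powr p)"
  proof -
    have pos: "1 + z\<^sup>2 > 0" by (simp add: add_pos_nonneg)
    have "(1 + z\<^sup>2) powr (p / 2 - 1) * z\<^sup>2 \<le> (1 + z\<^sup>2) powr (p / 2 - 1) * (1 + z\<^sup>2)"
      by (intro mult_left_mono) auto
    also have "\<dots> = (1 + z\<^sup>2) powr (p / 2)"
    proof -
      have "(1 + z\<^sup>2) powr (p / 2) = (1 + z\<^sup>2) powr (1 + (p / 2 - 1))" by simp
      also have "\<dots> = (1 + z\<^sup>2) powr 1 * (1 + z\<^sup>2) powr (p / 2 - 1)" by (rule powr_add)
      finally show ?thesis using pos by simp
    qed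
    also have "\<dots> \<le> 2 powr (p / 2) * (1 + \<bar>z\<bar> powr p)" by (rule powr_half_split[OF p])
    finally show ?thesis .
  qed
  have "(1 + (c * z)\<^sup>2) powr (p / 2 - 1) * (c * z)\<^sup>2 = c\<^sup>2 * ((1 + (c * z)\<^sup>2) powr (p / 2 - 1) * z\<^sup>2)"
    by (simp add: power_mult_distrib)
  also have "\<dots> \<le> c\<^sup>2 * ((1 + A\<^sup>2) powr (p / 2 - 1) * (1 + z\<^sup>2) powr (p / 2 - 1) * z\<^sup>2)"
    using h1 by (intro mult_left_mono mult_right_mono) auto
  also have "\<dots> \<le> c\<^sup>2 * ((1 + A\<^sup>2) powr (p / 2 - 1) * (2 powr (p / 2) * (1 + \<bar>z\<bar> powr p)))"
    using h2 by (simp add: mult.assoc mult_left_mono)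
  finally show ?thesis by (simp add: mult_ac)
qed

definition Kc :: "real \<Rightarrow> real \<Rightarrow> real \<Rightarrow> real" where
  "Kc p A mp = (p * (p - 1) / 2 * 2 powr (p / 2 - 1)) * ((1 + A\<^sup>2) powr (p / 2 - 1) * 2 powr (p / 2)) * (1 + mp)"

lemma psi_measurable[measurable]: "psi p \<in> borel_measurable borel"
  unfolding psi_def by measurable
lemma psi1_measurable[measurable]: "psi1 p \<in> borel_measurable borel"
  unfolding psi1_def by measurable

lemma (in prob_space) psi_moment:
  fixes Z :: "nat \<Rightarrow> 'a \<Rightarrow> real" and c :: "nat \<Rightarrow> real" and p mp A :: real
  assumes ind: "indep_vars (\<lambda>_. borel) Z UNIV"
    and intZ: "\<And>j. integrable M (Z j)" and mean: "\<And>j. expectation (Z j) = 0"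
    and intp: "\<And>j. integrable M (\<lambda>\<omega>. \<bar>Z j \<omega>\<bar> powr p)"
    and mp: "\<And>j. expectation (\<lambda>\<omega>. \<bar>Z j \<omega>\<bar> powr p) \<le> mp"
    and p: "p \<ge> 2" and cA: "\<And>j. \<bar>c j\<bar> \<le> A"
  shows "integrable M (\<lambda>\<omega>. psi p (\<Sum>j<N. c j * Z j \<omega>)) \<and>
         expectation (\<lambda>\<omega>. psi p (\<Sum>j<N. c j * Z j \<omega>)) \<le> (\<Prod>j<N. 1 + Kc p A mp * (c j)\<^sup>2)"
proof (induction N)
  case 0
  show ?case by (simp add: psi_def prob_space)
next
  case (Suc N)
  have rvZ[measurable]: "\<And>j. Z j \<in> borel_measurable M" using intZ by auto
  define S where "S \<omega> = (\<Sum>j<N. c j * Z j \<omega>)" for \<omega>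
  have S_meas[measurable]: "S \<in> borel_measurable M" unfolding S_def by measurable
  define cN where "cN = c N"
  define C2 where "C2 = p * (p - 1) / 2 * 2 powr (p / 2 - 1)"
  define B0 where "B0 = (1 + A\<^sup>2) powr (p / 2 - 1) * 2 powr (p / 2)"
  have C2: "C2 \<ge> 0" using p by (simp add: C2_def)
  have B0: "B0 \<ge> 0" by (simp add: B0_def)
  have "expectation (\<lambda>\<omega>. \<bar>Z 0 \<omega>\<bar> powr p) \<ge> 0" by (intro integral_nonneg_AE) auto
  then have mp0: "mp \<ge> 0" using mp[of 0] by linarith
  have K: "Kc p A mp = C2 * B0 * (1 + mp)" by (simp add: Kc_def C2_def B0_def)
  have IH1: "integrable M (\<lambda>\<omega>. psi p (S \<omega>))" and IH2: "expectation (\<lambda>\<omega>. psi p (S \<omega>)) \<le> (\<Prod>j<N. 1 + Kc p A mp * (c j)\<^sup>2)"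
    using Suc.IH by (simp_all add: S_def)
  have I1': "integrable M (\<lambda>\<omega>. psi1 p (S \<omega>))"
  proof (rule Bochner_Integration.integrable_bound[OF integrable_mult_right[OF IH1, of p]])
    show "(\<lambda>\<omega>. psi1 p (S \<omega>)) \<in> borel_measurable M" by measurable
    show "AE x in M. norm (psi1 p (S x)) \<le> norm (p * psi p (S x))"
    proof (intro AE_I2)
      fix x
      have "\<bar>psi p (S x)\<bar> = psi p (S x)" using psi_pos[of p "S x"] by simp
      then show "norm (psi1 p (S x)) \<le> norm (p * psi p (S x))"
        using psi1_abs[of p "S x"] p by (simp add: abs_mult)
    qed
  qed
  have ind1: "indep_var borel (\<lambda>\<omega>. psi1 p (S \<omega>)) borel (\<lambda>\<omega>. Z N \<omega>)"
    unfolding S_def by (rule indep_prefix_single[OF ind]) auto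
  have ind2: "indep_var borel (\<lambda>\<omega>. psi p (S \<omega>)) borel (\<lambda>\<omega>. 1 + \<bar>Z N \<omega>\<bar> powr p)"
    unfolding S_def by (rule indep_prefix_single[OF ind]) auto
  have intX2: "integrable M (\<lambda>\<omega>. 1 + \<bar>Z N \<omega>\<bar> powr p)" using intp[of N] by (simp add: prob_space)
  have I2: "integrable M (\<lambda>\<omega>. psi1 p (S \<omega>) * Z N \<omega>)"
    by (rule indep_var_integrable[OF ind1 I1' intZ])
  have E2: "expectation (\<lambda>\<omega>. psi1 p (S \<omega>) * Z N \<omega>) = 0"
    using indep_var_lebesgue_integral[OF ind1 I1' intZ] mean[of N] by simp
  have I3: "integrable M (\<lambda>\<omega>. psi p (S \<omega>) * (1 + \<bar>Z N \<omega>\<bar> powr p))"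
    by (rule indep_var_integrable[OF ind2 IH1 intX2])
  have E3: "expectation (\<lambda>\<omega>. psi p (S \<omega>) * (1 + \<bar>Z N \<omega>\<bar> powr p)) \<le> expectation (\<lambda>\<omega>. psi p (S \<omega>)) * (1 + mp)"
  proof -
    have "expectation (\<lambda>\<omega>. 1 + \<bar>Z N \<omega>\<bar> powr p) = 1 + expectation (\<lambda>\<omega>. \<bar>Z N \<omega>\<bar> powr p)"
      using intp[of N] by (simp add: prob_space)
    also have "\<dots> \<le> 1 + mp" using mp[of N] by simp
    finally have "expectation (\<lambda>\<omega>. 1 + \<bar>Z N \<omega>\<bar> powr p) \<le> 1 + mp" .
    moreover have "expectation (\<lambda>\<omega>. psi p (S \<omega>)) \<ge> 0"
      using psi_pos by (intro integral_nonneg_AE) (auto intro: less_imp_le)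
    ultimately show ?thesis
      using indep_var_lebesgue_integral[OF ind2 IH1 intX2] by (simp add: mult_left_mono)
  qed
  define R where "R \<omega> = psi p (S \<omega>) + cN * (psi1 p (S \<omega>) * Z N \<omega>) + (C2 * cN\<^sup>2 * B0) * (psi p (S \<omega>) * (1 + \<bar>Z N \<omega>\<bar> powr p))" for \<omega>
  have IR: "integrable M R" unfolding R_def
    by (rule Bochner_Integration.integrable_add integrable_mult_right IH1 I2 I3)+
  have ER: "expectation R = expectation (\<lambda>\<omega>. psi p (S \<omega>)) + cN * expectation (\<lambda>\<omega>. psi1 p (S \<omega>) * Z N \<omega>)
      + (C2 * cN\<^sup>2 * B0) * expectation (\<lambda>\<omega>. psi p (S \<omega>) * (1 + \<bar>Z N \<omega>\<bar> powr p))"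
  proof -
    have "expectation R = expectation (\<lambda>\<omega>. psi p (S \<omega>) + cN * (psi1 p (S \<omega>) * Z N \<omega>))
       + expectation (\<lambda>\<omega>. (C2 * cN\<^sup>2 * B0) * (psi p (S \<omega>) * (1 + \<bar>Z N \<omega>\<bar> powr p)))"
      unfolding R_def by (rule Bochner_Integration.integral_add) (rule Bochner_Integration.integrable_add integrable_mult_right IH1 I2 I3)+
    also have "expectation (\<lambda>\<omega>. psi p (S \<omega>) + cN * (psi1 p (S \<omega>) * Z N \<omega>)) =
       expectation (\<lambda>\<omega>. psi p (S \<omega>)) + expectation (\<lambda>\<omega>. cN * (psi1 p (S \<omega>) * Z N \<omega>))"
      by (rule Bochner_Integration.integral_add) (rule integrable_mult_right IH1 I2 I3)+
    also have "expectation (\<lambda>\<omega>. cN * (psi1 p (S \<omega>) * Z N \<omega>)) = cN * expectation (\<lambda>\<omega>. psi1 p (S \<omega>) * Z N \<omega>)"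
      by (rule integral_mult_right_zero)
    also have "expectation (\<lambda>\<omega>. (C2 * cN\<^sup>2 * B0) * (psi p (S \<omega>) * (1 + \<bar>Z N \<omega>\<bar> powr p))) =
       (C2 * cN\<^sup>2 * B0) * expectation (\<lambda>\<omega>. psi p (S \<omega>) * (1 + \<bar>Z N \<omega>\<bar> powr p))"
      by (rule integral_mult_right_zero)
    finally show ?thesis .
  qed
  have cA': "\<bar>cN\<bar> \<le> A" using cA by (simp add: cN_def)
  have pw: "psi p (\<Sum>j<Suc N. c j * Z j \<omega>) \<le> R \<omega>" for \<omega>
  proof -
    have "(\<Sum>j<Suc N. c j * Z j \<omega>) = S \<omega> + cN * Z N \<omega>" by (simp add: S_def cN_def)
    then have "psi p (\<Sum>j<Suc N. c j * Z j \<omega>) \<le> psi p (S \<omega>) + psi1 p (S \<omega>) * (cN * Z N \<omega>)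
       + C2 * psi p (S \<omega>) * ((1 + (cN * Z N \<omega>)\<^sup>2) powr (p / 2 - 1) * (cN * Z N \<omega>)\<^sup>2)"
      using psi_taylor[OF p, of "S \<omega>" "cN * Z N \<omega>"] by (simp add: C2_def)
    also have "C2 * psi p (S \<omega>) * ((1 + (cN * Z N \<omega>)\<^sup>2) powr (p / 2 - 1) * (cN * Z N \<omega>)\<^sup>2)
       \<le> C2 * psi p (S \<omega>) * (cN\<^sup>2 * (B0 * (1 + \<bar>Z N \<omega>\<bar> powr p)))"
      using h_bound[OF p cA', of "Z N \<omega>"] C2 psi_pos[of p "S \<omega>"]
      by (intro mult_left_mono) (auto simp: B0_def mult_ac)
    finally show ?thesis by (simp add: R_def mult_ac)
  qed
  have I4: "integrable M (\<lambda>\<omega>. psi p (\<Sum>j<Suc N. c j * Z j \<omega>))"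
  proof (rule Bochner_Integration.integrable_bound[OF IR])
    show "(\<lambda>\<omega>. psi p (\<Sum>j<Suc N. c j * Z j \<omega>)) \<in> borel_measurable M" by measurable
    show "AE x in M. norm (psi p (\<Sum>j<Suc N. c j * Z j x)) \<le> norm (R x)"
    proof (intro AE_I2)
      fix x
      have "0 < psi p (\<Sum>j<Suc N. c j * Z j x)" by (rule psi_pos)
      then show "norm (psi p (\<Sum>j<Suc N. c j * Z j x)) \<le> norm (R x)"
        using pw[of x] by simp
    qed
  qed
  have "expectation (\<lambda>\<omega>. psi p (\<Sum>j<Suc N. c j * Z j \<omega>)) \<le> expectation R"
    using I4 IR pw by (intro integral_mono) auto
  also have "\<dots> \<le> expectation (\<lambda>\<omega>. psi p (S \<omega>)) + (C2 * cN\<^sup>2 * B0) * (expectation (\<lambda>\<omega>. psi p (S \<omega>)) * (1 + mp))"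
    unfolding ER E2 using E3 C2 B0 by (simp add: mult_left_mono)
  also have "\<dots> = expectation (\<lambda>\<omega>. psi p (S \<omega>)) * (1 + Kc p A mp * (c N)\<^sup>2)"
    by (simp add: K cN_def algebra_simps)
  also have "\<dots> \<le> (\<Prod>j<N. 1 + Kc p A mp * (c j)\<^sup>2) * (1 + Kc p A mp * (c N)\<^sup>2)"
  proof (rule mult_right_mono[OF IH2])
    show "0 \<le> 1 + Kc p A mp * (c N)\<^sup>2" using K C2 B0 mp0 by simp
  qed
  also have "\<dots> = (\<Prod>j<Suc N. 1 + Kc p A mp * (c j)\<^sup>2)" by simp
  finally show ?case using I4 by simp
qed

lemma (in prob_space) indep_sum_single:
  fixes X :: "nat \<Rightarrow> 'a \<Rightarrow> real"
  assumes ind: "indep_vars (\<lambda>_. borel) X UNIV" and k: "k \<notin> I"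
    and F[measurable]: "F \<in> borel_measurable borel" and G[measurable]: "G \<in> borel_measurable borel"
  shows "indep_var borel (\<lambda>\<omega>. F (\<Sum>j\<in>I. X j \<omega>)) borel (\<lambda>\<omega>. G (X k \<omega>))"
proof -
  have "indep_var borel (\<lambda>\<omega>. (\<lambda>x. F (\<Sum>j\<in>I. x j)) (restrict (\<lambda>i. X i \<omega>) I))
     borel (\<lambda>\<omega>. (\<lambda>x. G (x k)) (restrict (\<lambda>i. X i \<omega>) {k}))"
    using k by (intro indep_blocks[OF ind]) auto
  moreover have "(\<lambda>\<omega>. (\<lambda>x. F (\<Sum>j\<in>I. x j)) (restrict (\<lambda>i. X i \<omega>) I)) = (\<lambda>\<omega>. F (\<Sum>j\<in>I. X j \<omega>))"
    by (intro ext arg_cong[where f=F] sum.cong) auto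
  moreover have "(\<lambda>\<omega>. (\<lambda>x. G (x k)) (restrict (\<lambda>i. X i \<omega>) {k})) = (\<lambda>\<omega>. G (X k \<omega>))"
    by auto
  ultimately show ?thesis by simp
qed

lemma (in prob_space) sq_sum:
  fixes X :: "nat \<Rightarrow> 'a \<Rightarrow> real"
  assumes ind: "indep_vars (\<lambda>_. borel) X UNIV"
    and int1: "\<And>j. integrable M (X j)" and int2: "\<And>j. integrable M (\<lambda>\<omega>. (X j \<omega>)\<^sup>2)"
    and mean: "\<And>j. expectation (X j) = 0"
  shows "integrable M (\<lambda>\<omega>. (\<Sum>j\<in>{m..<m+d}. X j \<omega>)\<^sup>2) \<and>
         expectation (\<lambda>\<omega>. (\<Sum>j\<in>{m..<m+d}. X j \<omega>)\<^sup>2) = (\<Sum>j\<in>{m..<m+d}. expectation (\<lambda>\<omega>. (X j \<omega>)\<^sup>2))"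
proof (induction d)
  case 0 then show ?case by simp
next
  case (Suc d)
  define T where "T \<omega> = (\<Sum>j\<in>{m..<m+d}. X j \<omega>)" for \<omega>
  define k where "k = m + d"
  have IH1: "integrable M (\<lambda>\<omega>. (T \<omega>)\<^sup>2)" and IH2: "expectation (\<lambda>\<omega>. (T \<omega>)\<^sup>2) = (\<Sum>j\<in>{m..<m+d}. expectation (\<lambda>\<omega>. (X j \<omega>)\<^sup>2))"
    using Suc.IH by (simp_all add: T_def)
  have iT: "integrable M T" unfolding T_def using int1 by auto
  have eT: "(\<Sum>j\<in>{m..<m+Suc d}. X j \<omega>) = T \<omega> + X k \<omega>" for \<omega>
    by (simp add: T_def k_def)
  have indTX: "indep_var borel (\<lambda>\<omega>. T \<omega>) borel (\<lambda>\<omega>. X k \<omega>)"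
    unfolding T_def by (rule indep_sum_single[OF ind]) (auto simp: k_def)
  have iTX: "integrable M (\<lambda>\<omega>. T \<omega> * X k \<omega>)" by (rule indep_var_integrable[OF indTX iT int1])
  have eTX: "expectation (\<lambda>\<omega>. T \<omega> * X k \<omega>) = 0"
    using indep_var_lebesgue_integral[OF indTX iT int1] mean[of k] by simp
  have sq: "(T \<omega> + X k \<omega>)\<^sup>2 = (T \<omega>)\<^sup>2 + 2 * (T \<omega> * X k \<omega>) + (X k \<omega>)\<^sup>2" for \<omega>
    by (simp add: power2_sum)
  have i3: "integrable M (\<lambda>\<omega>. (T \<omega>)\<^sup>2 + 2 * (T \<omega> * X k \<omega>) + (X k \<omega>)\<^sup>2)"
    by (rule Bochner_Integration.integrable_add integrable_mult_right IH1 iTX int2)+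
  have e3: "expectation (\<lambda>\<omega>. (T \<omega>)\<^sup>2 + 2 * (T \<omega> * X k \<omega>) + (X k \<omega>)\<^sup>2)
     = expectation (\<lambda>\<omega>. (T \<omega>)\<^sup>2) + 2 * expectation (\<lambda>\<omega>. T \<omega> * X k \<omega>) + expectation (\<lambda>\<omega>. (X k \<omega>)\<^sup>2)"
  proof -
    have "expectation (\<lambda>\<omega>. (T \<omega>)\<^sup>2 + 2 * (T \<omega> * X k \<omega>) + (X k \<omega>)\<^sup>2)
      = expectation (\<lambda>\<omega>. (T \<omega>)\<^sup>2 + 2 * (T \<omega> * X k \<omega>)) + expectation (\<lambda>\<omega>. (X k \<omega>)\<^sup>2)"
      by (rule Bochner_Integration.integral_add) (rule Bochner_Integration.integrable_add integrable_mult_right IH1 iTX int2)+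
    also have "expectation (\<lambda>\<omega>. (T \<omega>)\<^sup>2 + 2 * (T \<omega> * X k \<omega>)) = expectation (\<lambda>\<omega>. (T \<omega>)\<^sup>2) + expectation (\<lambda>\<omega>. 2 * (T \<omega> * X k \<omega>))"
      by (rule Bochner_Integration.integral_add) (rule integrable_mult_right IH1 iTX)+
    also have "expectation (\<lambda>\<omega>. 2 * (T \<omega> * X k \<omega>)) = 2 * expectation (\<lambda>\<omega>. T \<omega> * X k \<omega>)"
      by (rule integral_mult_right_zero)
    finally show ?thesis .
  qed
  have "integrable M (\<lambda>\<omega>. (\<Sum>j\<in>{m..<m+Suc d}. X j \<omega>)\<^sup>2)"
    unfolding eT sq by (rule i3)
  moreover have "expectation (\<lambda>\<omega>. (\<Sum>j\<in>{m..<m+Suc d}. X j \<omega>)\<^sup>2) = (\<Sum>j\<in>{m..<m+Suc d}. expectation (\<lambda>\<omega>. (X j \<omega>)\<^sup>2))"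
    unfolding eT sq e3 eTX IH2 by (simp add: k_def)
  ultimately show ?case by simp
qed

lemma first_hit_sum:
  fixes T :: "nat \<Rightarrow> real" and lam :: real
  shows "(if \<exists>k\<in>{m..N}. lam \<le> \<bar>T k\<bar> then 1 else 0) =
    (\<Sum>k\<in>{m..N}. if lam \<le> \<bar>T k\<bar> \<and> (\<forall>i\<in>{m..<k}. \<bar>T i\<bar> < lam) then 1 else (0::real))"
proof (cases "\<exists>k\<in>{m..N}. lam \<le> \<bar>T k\<bar>")
  case True
  define k0 where "k0 = (LEAST k. k \<in> {m..N} \<and> lam \<le> \<bar>T k\<bar>)"
  have k0: "k0 \<in> {m..N} \<and> lam \<le> \<bar>T k0\<bar>" unfolding k0_def using True by (metis (mono_tags, lifting) LeastI)
  have k0min: "\<And>k. k \<in> {m..N} \<and> lam \<le> \<bar>T k\<bar> \<Longrightarrow> k0 \<le> k" unfolding k0_def by (rule Least_le)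
  have iff: "(lam \<le> \<bar>T k\<bar> \<and> (\<forall>i\<in>{m..<k}. \<bar>T i\<bar> < lam)) \<longleftrightarrow> k = k0" if "k \<in> {m..N}" for k
  proof
    assume H: "lam \<le> \<bar>T k\<bar> \<and> (\<forall>i\<in>{m..<k}. \<bar>T i\<bar> < lam)"
    then have "k0 \<le> k" using k0min that by auto
    moreover have "\<not> k0 < k" using H k0 by force
    ultimately show "k = k0" by simp
  next
    assume "k = k0"
    moreover have "\<forall>i\<in>{m..<k0}. \<bar>T i\<bar> < lam"
    proof
      fix i assume "i \<in> {m..<k0}"
      then have "i \<in> {m..N}" "\<not> k0 \<le> i" using k0 by auto
      then show "\<bar>T i\<bar> < lam" using k0min[of i] by force
    qed
    ultimately show "lam \<le> \<bar>T k\<bar> \<and> (\<forall>i\<in>{m..<k}. \<bar>T i\<bar> < lam)" using k0 by simp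
  qed
  have "(\<Sum>k\<in>{m..N}. if lam \<le> \<bar>T k\<bar> \<and> (\<forall>i\<in>{m..<k}. \<bar>T i\<bar> < lam) then 1 else (0::real))
      = (\<Sum>k\<in>{m..N}. if k = k0 then 1 else 0)"
    using iff by (intro sum.cong) auto
  also have "\<dots> = 1" using k0 by simp
  finally show ?thesis using True by simp
next
  case False
  then show ?thesis by (auto intro!: sum.neutral)
qed

lemma (in prob_space) kolmogorov_max:
  fixes X :: "nat \<Rightarrow> 'a \<Rightarrow> real"
  assumes ind: "indep_vars (\<lambda>_. borel) X UNIV"
    and int1: "\<And>j. integrable M (X j)" and int2: "\<And>j. integrable M (\<lambda>\<omega>. (X j \<omega>)\<^sup>2)"
    and mean: "\<And>j. expectation (X j) = 0" and lam: "lam > 0"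
  shows "lam\<^sup>2 * prob {\<omega>\<in>space M. \<exists>k\<in>{m..m+d}. lam \<le> \<bar>\<Sum>j\<in>{m..<k}. X j \<omega>\<bar>}
     \<le> (\<Sum>j\<in>{m..<m+d}. expectation (\<lambda>\<omega>. (X j \<omega>)\<^sup>2))"
proof -
  define N where "N = m + d"
  define T where "T k \<omega> = (\<Sum>j\<in>{m..<k}. X j \<omega>)" for k \<omega>
  define I where "I k \<omega> = (if lam \<le> \<bar>T k \<omega>\<bar> \<and> (\<forall>i\<in>{m..<k}. \<bar>T i \<omega>\<bar> < lam) then 1 else (0::real))" for k \<omega>
  have Xm[measurable]: "\<And>j. X j \<in> borel_measurable M" using int1 by auto
  have Tm[measurable]: "\<And>k. T k \<in> borel_measurable M" unfolding T_def by measurable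
  have Im[measurable]: "\<And>k. I k \<in> borel_measurable M" unfolding I_def by measurable
  have iT: "\<And>k. integrable M (T k)" unfolding T_def using int1 by auto
  have iT2: "integrable M (\<lambda>\<omega>. (T k \<omega>)\<^sup>2)" if "m \<le> k" for k
    using sq_sum[OF ind int1 int2 mean, of m "k - m"] that by (simp add: T_def)
  have I01: "I k \<omega> = 0 \<or> I k \<omega> = 1" for k \<omega> by (simp add: I_def)
  have iI: "integrable M (I k)" for k
    by (rule Bochner_Integration.integrable_bound[of _ "\<lambda>_. 1::real"]) (auto simp: I_def)
  have key: "lam\<^sup>2 * expectation (I k) \<le> expectation (\<lambda>\<omega>. (T N \<omega>)\<^sup>2 * I k \<omega>)" if k: "k \<in> {m..N}" for k
  proof -
    define V where "V \<omega> = (\<Sum>j\<in>{k..<N}. X j \<omega>)" for \<omega>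
    define U where "U \<omega> = T k \<omega> * I k \<omega>" for \<omega>
    have split: "T N \<omega> = T k \<omega> + V \<omega>" for \<omega>
      unfolding T_def V_def using k by (simp add: sum.atLeastLessThan_concat)
    have iV: "integrable M V" unfolding V_def using int1 by auto
    have eV: "expectation V = 0" unfolding V_def using int1 mean by simp
    have iU: "integrable M U" unfolding U_def
      by (rule Bochner_Integration.integrable_bound[OF iT[of k]]) (auto simp: I_def)
    have indUV: "indep_var borel U borel V"
    proof -
      define F where "F x = (\<Sum>j\<in>{m..<k}. x j) * (if lam \<le> \<bar>\<Sum>j\<in>{m..<k}. x j\<bar> \<and> (\<forall>i\<in>{m..<k}. \<bar>\<Sum>j\<in>{m..<i}. x j\<bar> < lam) then 1 else (0::real))" for x :: "nat \<Rightarrow> real"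
      define G where "G x = (\<Sum>j\<in>{k..<N}. x j)" for x :: "nat \<Rightarrow> real"
      have Fm: "F \<in> borel_measurable (PiM {m..<k} (\<lambda>_. borel))" unfolding F_def by measurable
      have Gm: "G \<in> borel_measurable (PiM {k..<N} (\<lambda>_. borel))" unfolding G_def by measurable
      have "indep_var borel (\<lambda>\<omega>. F (restrict (\<lambda>i. X i \<omega>) {m..<k})) borel (\<lambda>\<omega>. G (restrict (\<lambda>i. X i \<omega>) {k..<N}))"
        by (rule indep_blocks[OF ind _ _ _ Fm Gm]) auto
      moreover have "(\<lambda>\<omega>. F (restrict (\<lambda>i. X i \<omega>) {m..<k})) = U"
      proof
        fix \<omega>
        have s1: "(\<Sum>j\<in>{m..<k}. restrict (\<lambda>i. X i \<omega>) {m..<k} j) = T k \<omega>" unfolding T_def by (rule sum.cong) auto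
        have s2: "(\<Sum>j\<in>{m..<i}. restrict (\<lambda>i. X i \<omega>) {m..<k} j) = T i \<omega>" if "i \<in> {m..<k}" for i
          unfolding T_def using that by (intro sum.cong) auto
        have b: "(\<forall>i\<in>{m..<k}. \<bar>\<Sum>j\<in>{m..<i}. restrict (\<lambda>i. X i \<omega>) {m..<k} j\<bar> < lam) = (\<forall>i\<in>{m..<k}. \<bar>T i \<omega>\<bar> < lam)"
          using s2 by (intro ball_cong) auto
        show "F (restrict (\<lambda>i. X i \<omega>) {m..<k}) = U \<omega>"
          unfolding F_def U_def I_def s1 b by simp
      qed
      moreover have "(\<lambda>\<omega>. G (restrict (\<lambda>i. X i \<omega>) {k..<N})) = V"
        unfolding G_def V_def by (intro ext sum.cong) auto
      ultimately show ?thesis by simp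
    qed
    have iUV: "integrable M (\<lambda>\<omega>. U \<omega> * V \<omega>)" by (rule indep_var_integrable[OF indUV iU iV])
    have eUV: "expectation (\<lambda>\<omega>. U \<omega> * V \<omega>) = 0"
      using indep_var_lebesgue_integral[OF indUV iU iV] eV by simp
    have iTkI: "integrable M (\<lambda>\<omega>. (T k \<omega>)\<^sup>2 * I k \<omega>)"
      by (rule Bochner_Integration.integrable_bound[OF iT2[of k]]) (use k in \<open>auto simp: I_def\<close>)
    have iTNI: "integrable M (\<lambda>\<omega>. (T N \<omega>)\<^sup>2 * I k \<omega>)"
      by (rule Bochner_Integration.integrable_bound[OF iT2[of N]]) (use k in \<open>auto simp: I_def\<close>)
    have pw: "(T k \<omega>)\<^sup>2 * I k \<omega> + 2 * (U \<omega> * V \<omega>) \<le> (T N \<omega>)\<^sup>2 * I k \<omega>" for \<omega>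
    proof -
      have "(T N \<omega>)\<^sup>2 * I k \<omega> = (T k \<omega>)\<^sup>2 * I k \<omega> + 2 * (U \<omega> * V \<omega>) + (V \<omega>)\<^sup>2 * I k \<omega>"
        using I01[of k \<omega>] unfolding split U_def by (auto simp: power2_sum algebra_simps)
      moreover have "(V \<omega>)\<^sup>2 * I k \<omega> \<ge> 0" using I01[of k \<omega>] by auto
      ultimately show ?thesis by linarith
    qed
    have pw2: "lam\<^sup>2 * I k \<omega> \<le> (T k \<omega>)\<^sup>2 * I k \<omega>" for \<omega>
    proof (cases "I k \<omega> = 1")
      case True
      then have "lam \<le> \<bar>T k \<omega>\<bar>" by (simp add: I_def split: if_splits)
      then have "lam\<^sup>2 \<le> \<bar>T k \<omega>\<bar>\<^sup>2" using lam by (intro power_mono) auto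
      then show ?thesis using True by simp
    next
      case False then show ?thesis using I01[of k \<omega>] by simp
    qed
    have "lam\<^sup>2 * expectation (I k) = expectation (\<lambda>\<omega>. lam\<^sup>2 * I k \<omega>)" by simp
    also have "\<dots> \<le> expectation (\<lambda>\<omega>. (T k \<omega>)\<^sup>2 * I k \<omega>)"
      using pw2 iTkI iI by (intro integral_mono) auto
    also have "\<dots> = expectation (\<lambda>\<omega>. (T k \<omega>)\<^sup>2 * I k \<omega> + 2 * (U \<omega> * V \<omega>))"
      using iTkI iUV eUV by simp
    also have "\<dots> \<le> expectation (\<lambda>\<omega>. (T N \<omega>)\<^sup>2 * I k \<omega>)"
      using pw iTkI iUV iTNI by (intro integral_mono) auto
    finally show ?thesis .
  qed
  define Q where "Q \<omega> = (if \<exists>k\<in>{m..N}. lam \<le> \<bar>T k \<omega>\<bar> then 1 else (0::real))" for \<omega>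
  have Qsum: "Q \<omega> = (\<Sum>k\<in>{m..N}. I k \<omega>)" for \<omega>
    unfolding Q_def I_def by (rule first_hit_sum)
  have E_meas: "{\<omega>\<in>space M. \<exists>k\<in>{m..N}. lam \<le> \<bar>T k \<omega>\<bar>} \<in> events" by measurable
  have "prob {\<omega>\<in>space M. \<exists>k\<in>{m..N}. lam \<le> \<bar>T k \<omega>\<bar>} = expectation (indicator {\<omega>\<in>space M. \<exists>k\<in>{m..N}. lam \<le> \<bar>T k \<omega>\<bar>})"
    using E_meas by simp
  also have "\<dots> = expectation Q"
    by (intro Bochner_Integration.integral_cong) (auto simp: Q_def indicator_def)
  also have "\<dots> = (\<Sum>k\<in>{m..N}. expectation (I k))"
    unfolding Qsum using iI by (simp add: Bochner_Integration.integral_sum)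
  finally have probE: "prob {\<omega>\<in>space M. \<exists>k\<in>{m..N}. lam \<le> \<bar>T k \<omega>\<bar>} = (\<Sum>k\<in>{m..N}. expectation (I k))" .
  have "lam\<^sup>2 * prob {\<omega>\<in>space M. \<exists>k\<in>{m..N}. lam \<le> \<bar>T k \<omega>\<bar>} = (\<Sum>k\<in>{m..N}. lam\<^sup>2 * expectation (I k))"
    unfolding probE by (simp add: sum_distrib_left)
  also have "\<dots> \<le> (\<Sum>k\<in>{m..N}. expectation (\<lambda>\<omega>. (T N \<omega>)\<^sup>2 * I k \<omega>))"
    using key by (intro sum_mono) auto
  also have "\<dots> = expectation (\<lambda>\<omega>. (T N \<omega>)\<^sup>2 * Q \<omega>)"
  proof -
    have "(\<Sum>k\<in>{m..N}. expectation (\<lambda>\<omega>. (T N \<omega>)\<^sup>2 * I k \<omega>)) = expectation (\<lambda>\<omega>. \<Sum>k\<in>{m..N}. (T N \<omega>)\<^sup>2 * I k \<omega>)"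
    proof (rule Bochner_Integration.integral_sum[symmetric])
      fix k show "integrable M (\<lambda>\<omega>. (T N \<omega>)\<^sup>2 * I k \<omega>)"
        by (rule Bochner_Integration.integrable_bound[OF iT2[of N]]) (auto simp: I_def N_def)
    qed
    also have "\<dots> = expectation (\<lambda>\<omega>. (T N \<omega>)\<^sup>2 * Q \<omega>)"
      unfolding Qsum by (simp add: sum_distrib_left)
    finally show ?thesis .
  qed
  also have "\<dots> \<le> expectation (\<lambda>\<omega>. (T N \<omega>)\<^sup>2)"
  proof (rule integral_mono)
    show "integrable M (\<lambda>\<omega>. (T N \<omega>)\<^sup>2 * Q \<omega>)"
      by (rule Bochner_Integration.integrable_bound[OF iT2[of N]]) (auto simp: Q_def N_def)
    show "integrable M (\<lambda>\<omega>. (T N \<omega>)\<^sup>2)" using iT2[of N] by (simp add: N_def)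
    fix \<omega> show "(T N \<omega>)\<^sup>2 * Q \<omega> \<le> (T N \<omega>)\<^sup>2" by (simp add: Q_def)
  qed
  also have "\<dots> = (\<Sum>j\<in>{m..<m+d}. expectation (\<lambda>\<omega>. (X j \<omega>)\<^sup>2))"
    using sq_sum[OF ind int1 int2 mean, of m d] by (simp add: T_def N_def)
  finally show ?thesis by (simp add: T_def N_def)
qed

lemma cauchy_from_tails:
  fixes x :: "nat \<Rightarrow> real"
  assumes H: "\<forall>n. \<exists>m. \<forall>k\<ge>m. \<bar>\<Sum>j\<in>{m..<k}. x j\<bar> < inverse (real (Suc n))"
  shows "summable x"
  unfolding summable_iff_convergent
proof (rule Cauchy_convergent, rule metric_CauchyI)
  fix e :: real assume e: "e > 0"
  obtain n where n: "n > 0" "inverse (real n) < e / 2" using ex_inverse_of_nat_less[of "e/2"] e by auto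
  have "inverse (real (Suc n)) \<le> inverse (real n)" using n by (simp add: field_simps)
  with n have ne: "inverse (real (Suc n)) < e / 2" by linarith
  obtain m where m: "\<And>k. k \<ge> m \<Longrightarrow> \<bar>\<Sum>j\<in>{m..<k}. x j\<bar> < inverse (real (Suc n))" using H by blast
  have split: "(\<Sum>i<k. x i) = (\<Sum>i<m. x i) + (\<Sum>j\<in>{m..<k}. x j)" if "k \<ge> m" for k
    using that by (simp add: atLeast0LessThan[symmetric] sum.atLeastLessThan_concat)
  show "\<exists>M. \<forall>a\<ge>M. \<forall>b\<ge>M. dist (\<Sum>i<a. x i) (\<Sum>i<b. x i) < e"
  proof (intro exI allI impI)
    fix a b assume ab: "a \<ge> m" "b \<ge> m"
    have "dist (\<Sum>i<a. x i) (\<Sum>i<b. x i) = \<bar>(\<Sum>j\<in>{m..<a}. x j) - (\<Sum>j\<in>{m..<b}. x j)\<bar>"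
      using split[OF ab(1)] split[OF ab(2)] by (simp add: dist_real_def)
    also have "\<dots> \<le> \<bar>\<Sum>j\<in>{m..<a}. x j\<bar> + \<bar>\<Sum>j\<in>{m..<b}. x j\<bar>" by linarith
    also have "\<dots> < e" using m[OF ab(1)] m[OF ab(2)] ne by linarith
    finally show "dist (\<Sum>i<a. x i) (\<Sum>i<b. x i) < e" .
  qed
qed

lemma (in prob_space) kolmogorov_as:
  fixes X :: "nat \<Rightarrow> 'a \<Rightarrow> real"
  assumes ind: "indep_vars (\<lambda>_. borel) X UNIV"
    and int1: "\<And>j. integrable M (X j)" and int2: "\<And>j. integrable M (\<lambda>\<omega>. (X j \<omega>)\<^sup>2)"
    and mean: "\<And>j. expectation (X j) = 0"
    and summ: "summable (\<lambda>j. expectation (\<lambda>\<omega>. (X j \<omega>)\<^sup>2))"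
  shows "AE \<omega> in M. summable (\<lambda>j. X j \<omega>)"
proof -
  define v where "v j = expectation (\<lambda>\<omega>. (X j \<omega>)\<^sup>2)" for j
  have v0: "v j \<ge> 0" for j unfolding v_def by (intro integral_nonneg_AE) auto
  have sv: "summable v" using summ unfolding v_def by simp
  define tail where "tail m = (\<Sum>i. v (i + m))" for m
  have tail0: "tail \<longlonglongrightarrow> 0" unfolding tail_def by (rule suminf_exist_split2[OF sv])
  have Xm[measurable]: "\<And>j. X j \<in> borel_measurable M" using int1 by auto
  have step1: "prob {\<omega>\<in>space M. \<exists>k\<ge>m. eps \<le> \<bar>\<Sum>j\<in>{m..<k}. X j \<omega>\<bar>} \<le> tail m / eps\<^sup>2" if eps: "eps > 0" for eps m
  proof -
    define B where "B d = {\<omega>\<in>space M. \<exists>k\<in>{m..m+d}. eps \<le> \<bar>\<Sum>j\<in>{m..<k}. X j \<omega>\<bar>}" for d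
    have Bm: "range B \<subseteq> events" unfolding B_def by (auto intro!: sets.sets_Collect_countable_Ex sets.sets_Collect_finite_Ex) measurable
    have Binc: "incseq B" unfolding B_def incseq_def by force
    have Bun: "(\<Union>d. B d) = {\<omega>\<in>space M. \<exists>k\<ge>m. eps \<le> \<bar>\<Sum>j\<in>{m..<k}. X j \<omega>\<bar>}"
      unfolding B_def by (auto, metis le_add_diff_inverse atLeastAtMost_iff order_refl)
    have lim: "(\<lambda>d. prob (B d)) \<longlonglongrightarrow> prob (\<Union>d. B d)" by (rule finite_Lim_measure_incseq[OF Bm Binc])
    have bnd: "prob (B d) \<le> tail m / eps\<^sup>2" for d
    proof -
      have "eps\<^sup>2 * prob (B d) \<le> (\<Sum>j\<in>{m..<m+d}. v j)"
        unfolding B_def v_def by (rule kolmogorov_max[OF ind int1 int2 mean eps])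
      also have "(\<Sum>j\<in>{m..<m+d}. v j) = (\<Sum>i<d. v (i + m))"
        by (rule sum.reindex_bij_witness[where j="\<lambda>j. j - m" and i="\<lambda>i. i + m"]) auto
      also have "\<dots> \<le> tail m" unfolding tail_def
        using summable_ignore_initial_segment[OF sv, of m] v0 by (intro sum_le_suminf) auto
      finally have "eps\<^sup>2 * prob (B d) \<le> tail m" .
      then show ?thesis using eps by (simp add: field_simps)
    qed
    have "prob (\<Union>d. B d) \<le> tail m / eps\<^sup>2"
      using lim bnd by (intro LIMSEQ_le_const2[OF lim]) auto
    then show ?thesis using Bun by simp
  qed
  have step2: "AE \<omega> in M. \<exists>m. \<forall>k\<ge>m. \<bar>\<Sum>j\<in>{m..<k}. X j \<omega>\<bar> < eps" if eps: "eps > 0" for eps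
  proof -
    define C where "C = {\<omega>\<in>space M. \<forall>m. \<exists>k\<ge>m. eps \<le> \<bar>\<Sum>j\<in>{m..<k}. X j \<omega>\<bar>}"
    have Cm: "C \<in> events" unfolding C_def by measurable
    have "prob C \<le> tail m / eps\<^sup>2" for m
    proof -
      have "prob C \<le> prob {\<omega>\<in>space M. \<exists>k\<ge>m. eps \<le> \<bar>\<Sum>j\<in>{m..<k}. X j \<omega>\<bar>}"
        by (rule finite_measure_mono) (auto simp: C_def)
      also have "\<dots> \<le> tail m / eps\<^sup>2" by (rule step1[OF eps])
      finally show ?thesis .
    qed
    moreover have "(\<lambda>m. tail m / eps\<^sup>2) \<longlonglongrightarrow> 0 / eps\<^sup>2" by (intro tendsto_divide tail0 tendsto_const) (use eps in auto)
    ultimately have "prob C \<le> 0" by (intro LIMSEQ_le_const[of "\<lambda>m. tail m / eps\<^sup>2"]) auto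
    then have "prob C = 0" using measure_nonneg[of M C] by linarith
    then have "emeasure M C = 0" by (simp add: emeasure_eq_measure)
    then show ?thesis
      by (subst AE_iff_measurable[OF Cm]) (auto simp: C_def not_less)
  qed
  have "AE \<omega> in M. \<forall>n. \<exists>m. \<forall>k\<ge>m. \<bar>\<Sum>j\<in>{m..<k}. X j \<omega>\<bar> < inverse (real (Suc n))"
    by (subst AE_all_countable) (auto intro!: step2)
  then show ?thesis by (rule AE_mp) (auto intro!: AE_I2 cauchy_from_tails)
qed

lemma (in prob_space) weighted_sum_as:
  fixes Z :: "nat \<Rightarrow> 'a \<Rightarrow> real" and c :: "nat \<Rightarrow> real"
  assumes ind: "indep_vars (\<lambda>_. borel) Z UNIV"
    and intZ: "\<And>j. integrable M (Z j)" and mean: "\<And>j. expectation (Z j) = 0"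
    and int2: "\<And>j. integrable M (\<lambda>\<omega>. (Z j \<omega>)\<^sup>2)" and s2: "\<And>j. expectation (\<lambda>\<omega>. (Z j \<omega>)\<^sup>2) \<le> s2"
    and csq: "summable (\<lambda>j. (c j)\<^sup>2)"
  shows "AE \<omega> in M. summable (\<lambda>j. c j * Z j \<omega>)"
proof (rule kolmogorov_as)
  have "indep_vars (\<lambda>_. borel) (\<lambda>j x. (\<lambda>z. c j * z) (Z j x)) UNIV"
    by (rule indep_vars_compose2[OF ind]) auto
  then show "indep_vars (\<lambda>_. borel) (\<lambda>j \<omega>. c j * Z j \<omega>) UNIV" by simp
  show "\<And>j. integrable M (\<lambda>\<omega>. c j * Z j \<omega>)" using intZ by auto
  show "\<And>j. integrable M (\<lambda>\<omega>. (c j * Z j \<omega>)\<^sup>2)" using int2 by (simp add: power_mult_distrib)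
  show "\<And>j. expectation (\<lambda>\<omega>. c j * Z j \<omega>) = 0" using mean by simp
  show "summable (\<lambda>j. expectation (\<lambda>\<omega>. (c j * Z j \<omega>)\<^sup>2))"
  proof (rule summable_comparison_test)
    show "summable (\<lambda>j. (c j)\<^sup>2 * s2)" using csq by (rule summable_mult2)
    show "\<exists>N. \<forall>n\<ge>N. norm (expectation (\<lambda>\<omega>. (c n * Z n \<omega>)\<^sup>2)) \<le> (c n)\<^sup>2 * s2"
    proof (intro exI allI impI)
      fix n
      have e: "expectation (\<lambda>\<omega>. (c n * Z n \<omega>)\<^sup>2) = (c n)\<^sup>2 * expectation (\<lambda>\<omega>. (Z n \<omega>)\<^sup>2)"
        by (simp add: power_mult_distrib)
      have "expectation (\<lambda>\<omega>. (Z n \<omega>)\<^sup>2) \<ge> 0" by (intro integral_nonneg_AE) auto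
      then show "norm (expectation (\<lambda>\<omega>. (c n * Z n \<omega>)\<^sup>2)) \<le> (c n)\<^sup>2 * s2"
        unfolding e using s2[of n] by (simp add: abs_mult mult_left_mono)
    qed
  qed
qed

lemma prod_le_exp:
  fixes x :: "nat \<Rightarrow> real"
  assumes "\<And>j. x j \<ge> 0"
  shows "(\<Prod>j<N. 1 + x j) \<le> exp (\<Sum>j<N. x j)"
proof -
  have "(\<Prod>j<N. 1 + x j) \<le> (\<Prod>j<N. exp (x j))"
  proof (rule prod_mono)
    fix i
    show "0 \<le> 1 + x i \<and> 1 + x i \<le> exp (x i)" using assms[of i] exp_ge_add_one_self[of "x i"] by linarith
  qed
  also have "\<dots> = exp (\<Sum>j<N. x j)" by (simp add: exp_sum)
  finally show ?thesis .
qed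

lemma (in prob_space) weighted_sum_moment:
  fixes Z :: "nat \<Rightarrow> 'a \<Rightarrow> real" and c :: "nat \<Rightarrow> real" and p mp A s2 :: real
  assumes ind: "indep_vars (\<lambda>_. borel) Z UNIV"
    and intZ: "\<And>j. integrable M (Z j)" and mean: "\<And>j. expectation (Z j) = 0"
    and int2: "\<And>j. integrable M (\<lambda>\<omega>. (Z j \<omega>)\<^sup>2)" and s2: "\<And>j. expectation (\<lambda>\<omega>. (Z j \<omega>)\<^sup>2) \<le> s2"
    and intp: "\<And>j. integrable M (\<lambda>\<omega>. \<bar>Z j \<omega>\<bar> powr p)"
    and mp: "\<And>j. expectation (\<lambda>\<omega>. \<bar>Z j \<omega>\<bar> powr p) \<le> mp"
    and p: "p \<ge> 2" and cA: "\<And>j. \<bar>c j\<bar> \<le> A"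
    and csq: "summable (\<lambda>j. (c j)\<^sup>2)"
  shows "(\<integral>\<^sup>+\<omega>. ennreal (psi p (\<Sum>j. c j * Z j \<omega>)) \<partial>M) \<le> ennreal (exp (Kc p A mp * (\<Sum>j. (c j)\<^sup>2)))"
proof -
  define K where "K = Kc p A mp"
  have "expectation (\<lambda>\<omega>. \<bar>Z 0 \<omega>\<bar> powr p) \<ge> 0" by (intro integral_nonneg_AE) auto
  then have mp0: "mp \<ge> 0" using mp[of 0] by linarith
  have K0: "K \<ge> 0" unfolding K_def Kc_def using p mp0 by (intro mult_nonneg_nonneg) auto
  have Zm[measurable]: "\<And>j. Z j \<in> borel_measurable M" using intZ by auto
  have AEs: "AE \<omega> in M. summable (\<lambda>j. c j * Z j \<omega>)"
    by (rule weighted_sum_as[OF ind intZ mean int2 s2 csq])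
  define u where "u n \<omega> = ennreal (psi p (\<Sum>j<n. c j * Z j \<omega>))" for n \<omega>
  have um: "\<And>n. u n \<in> borel_measurable M" unfolding u_def by measurable
  have AEl: "AE \<omega> in M. ennreal (psi p (\<Sum>j. c j * Z j \<omega>)) = liminf (\<lambda>n. u n \<omega>)"
  proof (rule AE_mp[OF AEs], intro AE_I2 impI)
    fix \<omega> assume "summable (\<lambda>j. c j * Z j \<omega>)"
    then have "(\<lambda>n. \<Sum>j<n. c j * Z j \<omega>) \<longlonglongrightarrow> (\<Sum>j. c j * Z j \<omega>)" by (rule summable_LIMSEQ)
    then have "(\<lambda>n. psi p (\<Sum>j<n. c j * Z j \<omega>)) \<longlonglongrightarrow> psi p (\<Sum>j. c j * Z j \<omega>)"
    proof -
      have "1 + (\<Sum>j. c j * Z j \<omega>)\<^sup>2 \<noteq> 0" by (smt (verit) zero_le_power2)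
      then show ?thesis unfolding psi_def by (intro tendsto_intros \<open>(\<lambda>n. \<Sum>j<n. c j * Z j \<omega>) \<longlonglongrightarrow> (\<Sum>j. c j * Z j \<omega>)\<close>) auto
    qed
    then have "(\<lambda>n. u n \<omega>) \<longlonglongrightarrow> ennreal (psi p (\<Sum>j. c j * Z j \<omega>))"
      unfolding u_def by (rule tendsto_ennrealI)
    then show "ennreal (psi p (\<Sum>j. c j * Z j \<omega>)) = liminf (\<lambda>n. u n \<omega>)"
      by (simp add: lim_imp_Liminf)
  qed
  have bnd: "integral\<^sup>N M (u n) \<le> ennreal (exp (K * (\<Sum>j. (c j)\<^sup>2)))" for n
  proof -
    have pm: "integrable M (\<lambda>\<omega>. psi p (\<Sum>j<n. c j * Z j \<omega>)) \<and>
         expectation (\<lambda>\<omega>. psi p (\<Sum>j<n. c j * Z j \<omega>)) \<le> (\<Prod>j<n. 1 + Kc p A mp * (c j)\<^sup>2)"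
      by (rule psi_moment[OF ind intZ mean intp mp p cA])
    have "integral\<^sup>N M (u n) = ennreal (expectation (\<lambda>\<omega>. psi p (\<Sum>j<n. c j * Z j \<omega>)))"
      unfolding u_def using pm psi_pos by (intro nn_integral_eq_integral) (auto intro: less_imp_le)
    also have "\<dots> \<le> ennreal (\<Prod>j<n. 1 + K * (c j)\<^sup>2)" using pm unfolding K_def by (intro ennreal_leI) simp
    also have "\<dots> \<le> ennreal (exp (\<Sum>j<n. K * (c j)\<^sup>2))"
      using K0 by (intro ennreal_leI prod_le_exp) auto
    also have "\<dots> \<le> ennreal (exp (K * (\<Sum>j. (c j)\<^sup>2)))"
    proof (intro ennreal_leI exp_mono)
      have "(\<Sum>j<n. (c j)\<^sup>2) \<le> (\<Sum>j. (c j)\<^sup>2)" using csq by (intro sum_le_suminf) auto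
      then show "(\<Sum>j<n. K * (c j)\<^sup>2) \<le> K * (\<Sum>j. (c j)\<^sup>2)" using K0 by (simp add: sum_distrib_left[symmetric] mult_left_mono)
    qed
    finally show ?thesis .
  qed
  have "(\<integral>\<^sup>+\<omega>. ennreal (psi p (\<Sum>j. c j * Z j \<omega>)) \<partial>M) = (\<integral>\<^sup>+\<omega>. liminf (\<lambda>n. u n \<omega>) \<partial>M)"
    by (rule nn_integral_cong_AE[OF AEl])
  also have "\<dots> \<le> liminf (\<lambda>n. integral\<^sup>N M (u n))" by (rule nn_integral_liminf[OF um])
  also have "\<dots> \<le> liminf (\<lambda>n. ennreal (exp (K * (\<Sum>j. (c j)\<^sup>2))))"
    using bnd by (intro Liminf_mono) auto
  also have "\<dots> = ennreal (exp (K * (\<Sum>j. (c j)\<^sup>2)))" by (simp add: Liminf_const)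
  finally show ?thesis by (simp add: K_def)
qed

lemma powr_max_le_sum:
  fixes x y p :: real
  assumes "x \<ge> 0" "y \<ge> 0" "p \<ge> 0"
  shows "(max x y) powr p \<le> x powr p + y powr p"
proof -
  have a: "x powr p \<ge> 0" "y powr p \<ge> 0" by simp_all
  show ?thesis
  proof (cases "x \<le> y")
    case True then have "max x y = y" by simp
    then show ?thesis using a by simp
  next
    case False then have "max x y = x" by simp
    then show ?thesis using a by simp
  qed
qed

lemma abs_powr_le_psi:
  fixes t p :: real assumes "p \<ge> 0"
  shows "\<bar>t\<bar> powr p \<le> psi p t"
proof (cases "t = 0")
  case True then show ?thesis using psi_pos[of p t] by simp
next
  case False
  then have tp: "\<bar>t\<bar> > 0" by simp
  have "\<bar>t\<bar> powr p = (\<bar>t\<bar> powr 2) powr (p / 2)" by (simp only: powr_powr) simp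
  also have "\<bar>t\<bar> powr 2 = t\<^sup>2" using tp by (simp add: powr_numeral)
  also have "t\<^sup>2 powr (p / 2) \<le> (1 + t\<^sup>2) powr (p / 2)"
    using assms by (intro powr_mono2) auto
  finally show ?thesis by (simp add: psi_def)
qed

lemma one_le_psi:
  fixes t p :: real assumes "p \<ge> 0"
  shows "1 \<le> psi p t"
  unfolding psi_def using assms by (intro ge_one_powr_ge_zero) auto

lemma W_bound:
  fixes u v p :: real assumes p: "p \<ge> 0"
  shows "(1 + \<bar>u\<bar> + \<bar>v\<bar>) powr p \<le> 3 powr p * (psi p u + psi p v)"
proof -
  define m where "m = max 1 (max \<bar>u\<bar> \<bar>v\<bar>)"
  have m1: "m \<ge> 1" by (simp add: m_def)
  have "1 + \<bar>u\<bar> + \<bar>v\<bar> \<le> 3 * m" unfolding m_def by linarith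
  then have "(1 + \<bar>u\<bar> + \<bar>v\<bar>) powr p \<le> (3 * m) powr p" using p by (intro powr_mono2) auto
  also have "\<dots> = 3 powr p * m powr p" using m1 by (simp add: powr_mult)
  also have "m powr p \<le> psi p u + psi p v"
  proof -
    have pu: "psi p u \<ge> 1" "psi p v \<ge> 1" using one_le_psi p by auto
    have au: "\<bar>u\<bar> powr p \<le> psi p u" and av: "\<bar>v\<bar> powr p \<le> psi p v"
      using abs_powr_le_psi[OF p] by auto
    have "m = 1 \<or> m = \<bar>u\<bar> \<or> m = \<bar>v\<bar>" unfolding m_def by linarith
    then show ?thesis
    proof (elim disjE)
      assume "m = 1" then have "m powr p = 1" by simp
      then show ?thesis using pu by linarith
    next
      assume "m = \<bar>u\<bar>" then have "m powr p = \<bar>u\<bar> powr p" by simp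
      then show ?thesis using pu au by linarith
    next
      assume "m = \<bar>v\<bar>" then have "m powr p = \<bar>v\<bar> powr p" by simp
      then show ?thesis using pu av by linarith
    qed
  qed
  then have "3 powr p * m powr p \<le> 3 powr p * (psi p u + psi p v)" by (intro mult_left_mono) auto
  finally show ?thesis .
qed

lemma D_bound:
  fixes e0 e1 p :: real assumes p: "p \<ge> 0"
  shows "\<bar>e1 - e0\<bar> powr p \<le> 2 powr p * (\<bar>e0\<bar> powr p + \<bar>e1\<bar> powr p)"
proof -
  define mx where "mx = max \<bar>e0\<bar> \<bar>e1\<bar>"
  have m1: "\<bar>e0\<bar> \<le> mx" "\<bar>e1\<bar> \<le> mx" unfolding mx_def by simp_all
  have t: "\<bar>e1 - e0\<bar> \<le> \<bar>e1\<bar> + \<bar>e0\<bar>" by (rule abs_triangle_ineq4)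
  have "\<bar>e1 - e0\<bar> \<le> 2 * mx" using m1 t by linarith
  then have "\<bar>e1 - e0\<bar> powr p \<le> (2 * mx) powr p" using p by (intro powr_mono2) auto
  also have "\<dots> = 2 powr p * mx powr p" using m1 by (intro powr_mult)
  also have "mx powr p \<le> \<bar>e0\<bar> powr p + \<bar>e1\<bar> powr p"
    unfolding mx_def using p by (intro powr_max_le_sum) auto
  then have "2 powr p * mx powr p \<le> 2 powr p * (\<bar>e0\<bar> powr p + \<bar>e1\<bar> powr p)"
    by (intro mult_left_mono) auto
  finally show ?thesis .
qed

lemma young_split:
  fixes D W g :: real assumes W: "W > 0" and g: "g \<ge> 0"
  shows "D\<^sup>2 * W powr g \<le> \<bar>D\<bar> powr (2 + g) + W powr (2 + g)"
proof (cases "\<bar>D\<bar> \<le> W")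
  case True
  have sq: "D\<^sup>2 \<le> W\<^sup>2" using power_mono[OF True abs_ge_zero, of 2] by simp
  have wg: "W powr g \<ge> 0" by (rule powr_ge_zero)
  have "D\<^sup>2 * W powr g \<le> W\<^sup>2 * W powr g" using sq wg by (rule mult_right_mono)
  also have "W\<^sup>2 = W powr 2" using W by (intro powr_numeral[symmetric]) simp
  also have "W powr 2 * W powr g = W powr (2 + g)" by (rule powr_add[symmetric])
  finally have "D\<^sup>2 * W powr g \<le> W powr (2 + g)" .
  moreover have "\<bar>D\<bar> powr (2 + g) \<ge> 0" by (rule powr_ge_zero)
  ultimately show ?thesis by linarith
next
  case False
  then have Dp: "\<bar>D\<bar> > 0" using W by linarith
  have "W powr g \<le> \<bar>D\<bar> powr g" using False W g by (intro powr_mono2) auto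
  then have "D\<^sup>2 * W powr g \<le> D\<^sup>2 * \<bar>D\<bar> powr g" by (rule mult_left_mono) simp
  also have "D\<^sup>2 * \<bar>D\<bar> powr g = \<bar>D\<bar> powr (2 + g)"
  proof -
    have "\<bar>D\<bar> powr (2 + g) = \<bar>D\<bar> powr 2 * \<bar>D\<bar> powr g" by (rule powr_add)
    then show ?thesis by simp
  qed
  finally have "D\<^sup>2 * W powr g \<le> \<bar>D\<bar> powr (2 + g)" .
  moreover have "W powr (2 + g) \<ge> 0" by (rule powr_ge_zero)
  ultimately show ?thesis by linarith
qed

lemma pointwise_main:
  fixes f' :: "real \<Rightarrow> real" and \<gamma> u v a e0 e1 :: real
  assumes gamma: "\<gamma> \<ge> 0"
    and kappa: "integrable lborel (\<lambda>u. (f' u)\<^sup>2 * (1 + \<bar>u\<bar>) powr \<gamma>)"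
    and diff: "v - u = a * (e1 - e0)"
  shows "(rho_w \<gamma> f' u v)\<^sup>2 \<le> (LINT u|lborel. (f' u)\<^sup>2 * (1 + \<bar>u\<bar>) powr \<gamma>) * a\<^sup>2 *
     (2 powr (2 + \<gamma>) * (\<bar>e0\<bar> powr (2 + \<gamma>) + \<bar>e1\<bar> powr (2 + \<gamma>)) + 3 powr (2 + \<gamma>) * (psi (2 + \<gamma>) u + psi (2 + \<gamma>) v))"
proof -
  define \<kappa> where "\<kappa> = (LINT u|lborel. (f' u)\<^sup>2 * (1 + \<bar>u\<bar>) powr \<gamma>)"
  have k0: "\<kappa> \<ge> 0" unfolding \<kappa>_def by (intro integral_nonneg_AE) auto
  define W where "W = 1 + \<bar>u\<bar> + \<bar>v\<bar>"
  have W0: "W > 0" by (simp add: W_def add_pos_nonneg)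
  define p where "p = 2 + \<gamma>"
  have r0: "rho_w \<gamma> f' u v \<ge> 0" by (simp add: rho_w_def)
  have rb: "rho_w \<gamma> f' u v \<le> sqrt \<kappa> * \<bar>v - u\<bar> * W powr (\<gamma> / 2)"
    unfolding \<kappa>_def W_def by (rule rho_w_bound[OF gamma kappa])
  have "(rho_w \<gamma> f' u v)\<^sup>2 \<le> (sqrt \<kappa> * \<bar>v - u\<bar> * W powr (\<gamma> / 2))\<^sup>2"
    using r0 rb by (intro power_mono) auto
  also have "\<dots> = \<kappa> * (v - u)\<^sup>2 * W powr \<gamma>"
  proof -
    have "(W powr (\<gamma> / 2))\<^sup>2 = W powr (\<gamma> / 2) * W powr (\<gamma> / 2)" by (rule power2_eq_square)
    also have "\<dots> = W powr (\<gamma> / 2 + \<gamma> / 2)" by (rule powr_add[symmetric])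
    finally have "(W powr (\<gamma> / 2))\<^sup>2 = W powr \<gamma>" by simp
    then show ?thesis using k0 by (simp add: power_mult_distrib)
  qed
  also have "\<dots> = \<kappa> * a\<^sup>2 * ((e1 - e0)\<^sup>2 * W powr \<gamma>)" by (simp add: diff power_mult_distrib)
  also have "\<dots> \<le> \<kappa> * a\<^sup>2 * (\<bar>e1 - e0\<bar> powr p + W powr p)"
    unfolding p_def using k0 young_split[OF W0 gamma] by (intro mult_left_mono) auto
  also have "\<dots> \<le> \<kappa> * a\<^sup>2 * (2 powr p * (\<bar>e0\<bar> powr p + \<bar>e1\<bar> powr p) + 3 powr p * (psi p u + psi p v))"
  proof -
    have "\<bar>e1 - e0\<bar> powr p + W powr p \<le> 2 powr p * (\<bar>e0\<bar> powr p + \<bar>e1\<bar> powr p) + 3 powr p * (psi p u + psi p v)"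
    proof -
      have p0: "p \<ge> 0" using gamma by (simp add: p_def)
      show ?thesis unfolding W_def by (intro add_mono D_bound[OF p0] W_bound[OF p0])
    qed
    then show ?thesis using k0 by (intro mult_left_mono) auto
  qed
  finally show ?thesis by (simp add: \<kappa>_def p_def)
qed

lemma dist_transfer:
  fixes X Y :: "'a \<Rightarrow> real" and g :: "real \<Rightarrow> real"
  assumes X: "distributed M lborel X f" and Y: "distributed M lborel Y f"
    and g[measurable]: "g \<in> borel_measurable borel"
    and iX: "integrable M (\<lambda>\<omega>. g (X \<omega>))"
  shows "integrable M (\<lambda>\<omega>. g (Y \<omega>)) \<and> integral\<^sup>L M (\<lambda>\<omega>. g (Y \<omega>)) = integral\<^sup>L M (\<lambda>\<omega>. g (X \<omega>))"
proof -
  have Xm: "X \<in> measurable M lborel" and Ym: "Y \<in> measurable M lborel"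
    using distributed_measurable[OF X] distributed_measurable[OF Y] by auto
  have eq: "distr M lborel X = distr M lborel Y"
    using distributed_distr_eq_density[OF X] distributed_distr_eq_density[OF Y] by simp
  have gm: "g \<in> borel_measurable lborel" by simp
  have "integrable (distr M lborel X) g" using iX integrable_distr_eq[OF Xm gm] by simp
  then have "integrable (distr M lborel Y) g" by (simp add: eq)
  then have i: "integrable M (\<lambda>\<omega>. g (Y \<omega>))" using integrable_distr_eq[OF Ym gm] by simp
  have "integral\<^sup>L M (\<lambda>\<omega>. g (Y \<omega>)) = integral\<^sup>L (distr M lborel Y) g" using integral_distr[OF Ym gm] by simp
  also have "\<dots> = integral\<^sup>L (distr M lborel X) g" by (simp add: eq)
  also have "\<dots> = integral\<^sup>L M (\<lambda>\<omega>. g (X \<omega>))" using integral_distr[OF Xm gm] by simp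
  finally show ?thesis using i by simp
qed

lemma abs_le_one_plus_sq: fixes x :: real shows "\<bar>x\<bar> \<le> 1 + x\<^sup>2"
proof (cases "\<bar>x\<bar> \<le> 1")
  case True then show ?thesis by (smt (verit) zero_le_power2)
next
  case False
  have "\<bar>x\<bar> * 1 \<le> \<bar>x\<bar> * \<bar>x\<bar>" using False by (intro mult_left_mono) auto
  also have "\<bar>x\<bar> * \<bar>x\<bar> = x\<^sup>2" by (simp add: power2_eq_square abs_mult_self_eq)
  finally show ?thesis by simp
qed

theorem proposition4:
  fixes M :: "'a measure"
    and \<epsilon> :: "int \<Rightarrow> 'a \<Rightarrow> real"
    and \<epsilon>0s :: "'a \<Rightarrow> real"
    and a :: "nat \<Rightarrow> real"
    and f f' :: "real \<Rightarrow> real"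
    and \<gamma> :: real
  assumes "prob_space M"
    and indep: "prob_space.indep_vars M (\<lambda>_. borel)
                  (\<lambda>i. case i of None \<Rightarrow> \<epsilon>0s | Some k \<Rightarrow> \<epsilon> k) (UNIV :: int option set)"
    and f_nonneg: "\<And>x. f x \<ge> 0"
    and dens: "\<And>k. distributed M lborel (\<epsilon> k) (\<lambda>x. ennreal (f x))"
    and dens0s: "distributed M lborel \<epsilon>0s (\<lambda>x. ennreal (f x))"
    and f_deriv: "\<And>u. (f has_real_derivative f' u) (at u)"
    and mean0: "integrable M (\<epsilon> 0)" "prob_space.expectation M (\<epsilon> 0) = 0"
    and var: "integrable M (\<lambda>\<omega>. (\<epsilon> 0 \<omega>)\<^sup>2)" "prob_space.variance M (\<epsilon> 0) > 0"
    and a0: "a 0 = 1"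
    and a_sq: "summable (\<lambda>i. (a i)\<^sup>2)"
    and gamma: "\<gamma> \<ge> 0"
    and moment: "integrable M (\<lambda>\<omega>. \<bar>\<epsilon> 1 \<omega>\<bar> powr (2 + \<gamma>))"
    and kappa: "integrable lborel (\<lambda>u. (f' u)\<^sup>2 * (1 + \<bar>u\<bar>) powr \<gamma>)"
  shows "\<exists>C. \<forall>\<^sub>F n in sequentially.
           L2sq M (\<lambda>\<omega>. rho_w \<gamma> f'
              (\<Sum>j. a (Suc j) * \<epsilon> (int n - int j) \<omega>)
              (\<Sum>j. a (Suc j) * (\<epsilon>(0 := \<epsilon>0s)) (int n - int j) \<omega>))
           \<le> ennreal ((C * \<bar>a (Suc n)\<bar>)\<^sup>2)"
proof -
  interpret P: prob_space M by (rule assms(1))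
  define p where "p = 2 + \<gamma>"
  have p2: "p \<ge> 2" using gamma by (simp add: p_def)
  define s2 where "s2 = integral\<^sup>L M (\<lambda>\<omega>. (\<epsilon> 0 \<omega>)\<^sup>2)"
  define mp where "mp = integral\<^sup>L M (\<lambda>\<omega>. \<bar>\<epsilon> 1 \<omega>\<bar> powr p)"
  have good: "integrable M X \<and> integral\<^sup>L M X = 0 \<and> integrable M (\<lambda>\<omega>. (X \<omega>)\<^sup>2) \<and> integral\<^sup>L M (\<lambda>\<omega>. (X \<omega>)\<^sup>2) = s2
      \<and> integrable M (\<lambda>\<omega>. \<bar>X \<omega>\<bar> powr p) \<and> integral\<^sup>L M (\<lambda>\<omega>. \<bar>X \<omega>\<bar> powr p) = mp"
    if X: "distributed M lborel X (\<lambda>x. ennreal (f x))" for X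
  proof -
    have A: "integrable M (\<lambda>\<omega>. (\<lambda>x. x) (X \<omega>)) \<and> integral\<^sup>L M (\<lambda>\<omega>. (\<lambda>x. x) (X \<omega>)) = integral\<^sup>L M (\<lambda>\<omega>. (\<lambda>x. x) (\<epsilon> 0 \<omega>))"
      by (rule dist_transfer[OF dens[of 0] X]) (use mean0 in auto)
    have B: "integrable M (\<lambda>\<omega>. (\<lambda>x. x\<^sup>2) (X \<omega>)) \<and> integral\<^sup>L M (\<lambda>\<omega>. (\<lambda>x. x\<^sup>2) (X \<omega>)) = integral\<^sup>L M (\<lambda>\<omega>. (\<lambda>x. x\<^sup>2) (\<epsilon> 0 \<omega>))"
      by (rule dist_transfer[OF dens[of 0] X]) (use var in auto)
    have C: "integrable M (\<lambda>\<omega>. (\<lambda>x. \<bar>x\<bar> powr p) (X \<omega>)) \<and> integral\<^sup>L M (\<lambda>\<omega>. (\<lambda>x. \<bar>x\<bar> powr p) (X \<omega>)) = integral\<^sup>L M (\<lambda>\<omega>. (\<lambda>x. \<bar>x\<bar> powr p) (\<epsilon> 1 \<omega>))"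
      by (rule dist_transfer[OF dens[of 1] X]) (use moment in \<open>auto simp: p_def\<close>)
    have "integrable M X" using A by simp
    then show ?thesis using A B C mean0 by (simp add: s2_def mp_def)
  qed
  define A where "A = 1 + (\<Sum>i. (a i)\<^sup>2)"
  have csq: "summable (\<lambda>j. (a (Suc j))\<^sup>2)" using summable_Suc_iff[of "\<lambda>i. (a i)\<^sup>2"] a_sq by simp
  have cA: "\<bar>a (Suc j)\<bar> \<le> A" for j
  proof -
    have "(a (Suc j))\<^sup>2 \<le> (\<Sum>i. (a i)\<^sup>2)" using sum_le_suminf[OF a_sq, of "{Suc j}"] by simp
    then show ?thesis using abs_le_one_plus_sq[of "a (Suc j)"] by (simp add: A_def)
  qed
  define B1 where "B1 = exp (Kc p A mp * (\<Sum>j. (a (Suc j))\<^sup>2))"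
  have B10: "B1 \<ge> 0" by (simp add: B1_def)
  define \<kappa> where "\<kappa> = (LINT u|lborel. (f' u)\<^sup>2 * (1 + \<bar>u\<bar>) powr \<gamma>)"
  have k0: "\<kappa> \<ge> 0" unfolding \<kappa>_def by (intro integral_nonneg_AE) auto
  have mp0: "mp \<ge> 0" unfolding mp_def by (intro integral_nonneg_AE) auto
  define Bnd where "Bnd = 2 powr p * (2 * mp) + 3 powr p * (2 * B1)"
  have Bnd0: "Bnd \<ge> 0" using mp0 B10 by (simp add: Bnd_def)
  define Cst where "Cst = sqrt (\<kappa> * Bnd)"
  have main: "L2sq M (\<lambda>\<omega>. rho_w \<gamma> f'
              (\<Sum>j. a (Suc j) * \<epsilon> (int n - int j) \<omega>)
              (\<Sum>j. a (Suc j) * (\<epsilon>(0 := \<epsilon>0s)) (int n - int j) \<omega>))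
           \<le> ennreal ((Cst * \<bar>a (Suc n)\<bar>)\<^sup>2)" for n
  proof -
    define Z where "Z j = \<epsilon> (int n - int j)" for j
    define Z' where "Z' j = (\<epsilon>(0 := \<epsilon>0s)) (int n - int j)" for j
    define h where "h j = (if int n - int j = 0 then None else Some (int n - int j))" for j
    have indZ: "P.indep_vars (\<lambda>_. borel) Z UNIV"
    proof -
      have "P.indep_vars (\<lambda>j. (\<lambda>_. borel) (Some (int n - int j)))
          (\<lambda>j. (\<lambda>i. case i of None \<Rightarrow> \<epsilon>0s | Some k \<Rightarrow> \<epsilon> k) (Some (int n - int j))) UNIV"
        by (rule P.indep_vars_reindex[OF indep]) (auto simp: inj_on_def)
      then show ?thesis unfolding Z_def by (simp only: option.case)
    qed
    have indZ': "P.indep_vars (\<lambda>_. borel) Z' UNIV"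
    proof -
      have R: "P.indep_vars (\<lambda>j. (\<lambda>_. borel) (h j))
          (\<lambda>j. (\<lambda>i. case i of None \<Rightarrow> \<epsilon>0s | Some k \<Rightarrow> \<epsilon> k) (h j)) UNIV"
        by (rule P.indep_vars_reindex[OF indep]) (auto simp: inj_on_def h_def split: if_splits)
      have eqf: "(\<lambda>j. (\<lambda>i. case i of None \<Rightarrow> \<epsilon>0s | Some k \<Rightarrow> \<epsilon> k) (h j)) = Z'"
        by (rule ext) (simp add: h_def Z'_def)
      show ?thesis using R unfolding eqf .
    qed
    have dZ: "distributed M lborel (Z j) (\<lambda>x. ennreal (f x))" for j unfolding Z_def by (rule dens)
    have dZ': "distributed M lborel (Z' j) (\<lambda>x. ennreal (f x))" for j
      unfolding Z'_def using dens dens0s by (cases "int n - int j = 0") auto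
    note gZ = good[OF dZ] and gZ' = good[OF dZ']
    have Zm[measurable]: "Z j \<in> borel_measurable M" for j using gZ[of j] by auto
    have Zm'[measurable]: "Z' j \<in> borel_measurable M" for j using gZ'[of j] by auto
    have e0m[measurable]: "\<epsilon> 0 \<in> borel_measurable M" using mean0 by auto
    have e0sm[measurable]: "\<epsilon>0s \<in> borel_measurable M" using good[OF dens0s] by auto
    define Y where "Y \<omega> = (\<Sum>j. a (Suc j) * Z j \<omega>)" for \<omega>
    define Y' where "Y' \<omega> = (\<Sum>j. a (Suc j) * Z' j \<omega>)" for \<omega>
    have Ym[measurable]: "Y \<in> borel_measurable M" unfolding Y_def by measurable
    have Ym'[measurable]: "Y' \<in> borel_measurable M" unfolding Y'_def by measurable
    have mY: "(\<integral>\<^sup>+\<omega>. ennreal (psi p (Y \<omega>)) \<partial>M) \<le> ennreal B1"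
      unfolding Y_def B1_def
      by (rule P.weighted_sum_moment[OF indZ _ _ _ _ _ _ p2 cA csq]) (use gZ in auto)
    have mY': "(\<integral>\<^sup>+\<omega>. ennreal (psi p (Y' \<omega>)) \<partial>M) \<le> ennreal B1"
      unfolding Y'_def B1_def
      by (rule P.weighted_sum_moment[OF indZ' _ _ _ _ _ _ p2 cA csq]) (use gZ' in auto)
    have asY: "AE \<omega> in M. summable (\<lambda>j. a (Suc j) * Z j \<omega>)"
      by (rule P.weighted_sum_as[OF indZ _ _ _ _ csq]) (use gZ in auto)
    have asY': "AE \<omega> in M. summable (\<lambda>j. a (Suc j) * Z' j \<omega>)"
      by (rule P.weighted_sum_as[OF indZ' _ _ _ _ csq]) (use gZ' in auto)
    have psi_int: "integrable M (\<lambda>\<omega>. psi p (W \<omega>)) \<and> integral\<^sup>L M (\<lambda>\<omega>. psi p (W \<omega>)) \<le> B1"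
      if Wm: "W \<in> borel_measurable M" and mW: "(\<integral>\<^sup>+\<omega>. ennreal (psi p (W \<omega>)) \<partial>M) \<le> ennreal B1" for W
    proof -
      have nn: "AE \<omega> in M. 0 \<le> psi p (W \<omega>)" using psi_pos by (auto intro: less_imp_le)
      have i: "integrable M (\<lambda>\<omega>. psi p (W \<omega>))"
        by (rule integrableI_nonneg) (use Wm nn mW in \<open>auto simp: order_le_less_trans\<close>)
      have "ennreal (integral\<^sup>L M (\<lambda>\<omega>. psi p (W \<omega>))) = (\<integral>\<^sup>+\<omega>. ennreal (psi p (W \<omega>)) \<partial>M)"
        by (rule nn_integral_eq_integral[OF i nn, symmetric])
      also have "\<dots> \<le> ennreal B1" by (rule mW)
      finally have "integral\<^sup>L M (\<lambda>\<omega>. psi p (W \<omega>)) \<le> B1" using B10 by (simp add: ennreal_le_iff)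
      then show ?thesis using i by simp
    qed
    have iY: "integrable M (\<lambda>\<omega>. psi p (Y \<omega>))" and EY: "integral\<^sup>L M (\<lambda>\<omega>. psi p (Y \<omega>)) \<le> B1"
      using psi_int[OF Ym mY] by auto
    have iY': "integrable M (\<lambda>\<omega>. psi p (Y' \<omega>))" and EY': "integral\<^sup>L M (\<lambda>\<omega>. psi p (Y' \<omega>)) \<le> B1"
      using psi_int[OF Ym' mY'] by auto
    have g0: "integrable M (\<lambda>\<omega>. \<bar>\<epsilon> 0 \<omega>\<bar> powr p)" "integral\<^sup>L M (\<lambda>\<omega>. \<bar>\<epsilon> 0 \<omega>\<bar> powr p) = mp"
      using good[OF dens[of 0]] by auto
    have g0s: "integrable M (\<lambda>\<omega>. \<bar>\<epsilon>0s \<omega>\<bar> powr p)" "integral\<^sup>L M (\<lambda>\<omega>. \<bar>\<epsilon>0s \<omega>\<bar> powr p) = mp"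
      using good[OF dens0s] by auto
    define G where "G \<omega> = 2 powr p * (\<bar>\<epsilon> 0 \<omega>\<bar> powr p + \<bar>\<epsilon>0s \<omega>\<bar> powr p) + 3 powr p * (psi p (Y \<omega>) + psi p (Y' \<omega>))" for \<omega>
    have iG: "integrable M G" unfolding G_def
      by (intro Bochner_Integration.integrable_add integrable_mult_right g0(1) g0s(1) iY iY')
    have EG: "integral\<^sup>L M G \<le> Bnd"
    proof -
      have "integral\<^sup>L M G = 2 powr p * (integral\<^sup>L M (\<lambda>\<omega>. \<bar>\<epsilon> 0 \<omega>\<bar> powr p) + integral\<^sup>L M (\<lambda>\<omega>. \<bar>\<epsilon>0s \<omega>\<bar> powr p))
          + 3 powr p * (integral\<^sup>L M (\<lambda>\<omega>. psi p (Y \<omega>)) + integral\<^sup>L M (\<lambda>\<omega>. psi p (Y' \<omega>)))"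
        unfolding G_def using g0(1) g0s(1) iY iY' by simp
      also have "\<dots> \<le> 2 powr p * (mp + mp) + 3 powr p * (B1 + B1)"
        unfolding g0(2) g0s(2) using EY EY' by (intro add_mono mult_left_mono) auto
      finally show ?thesis by (simp add: Bnd_def)
    qed
    have G0: "G \<omega> \<ge> 0" for \<omega> unfolding G_def using psi_pos[of p "Y \<omega>"] psi_pos[of p "Y' \<omega>"]
      by (intro add_nonneg_nonneg mult_nonneg_nonneg) auto
    have pw: "AE \<omega> in M. (rho_w \<gamma> f' (Y \<omega>) (Y' \<omega>))\<^sup>2 \<le> \<kappa> * (a (Suc n))\<^sup>2 * G \<omega>"
    proof (rule AE_mp[OF AE_conjI[OF asY asY']], intro AE_I2 impI)
      fix \<omega> assume S: "summable (\<lambda>j. a (Suc j) * Z j \<omega>) \<and> summable (\<lambda>j. a (Suc j) * Z' j \<omega>)"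
      have dif: "(\<lambda>j. a (Suc j) * Z' j \<omega> - a (Suc j) * Z j \<omega>) = (\<lambda>j. if j = n then a (Suc n) * (\<epsilon>0s \<omega> - \<epsilon> 0 \<omega>) else 0)"
        by (rule ext) (simp add: Z_def Z'_def algebra_simps)
      have "Y' \<omega> - Y \<omega> = (\<Sum>j. a (Suc j) * Z' j \<omega> - a (Suc j) * Z j \<omega>)"
        unfolding Y_def Y'_def using S by (intro suminf_diff) auto
      also have "\<dots> = a (Suc n) * (\<epsilon>0s \<omega> - \<epsilon> 0 \<omega>)"
        unfolding dif using sums_single[of n "\<lambda>_. a (Suc n) * (\<epsilon>0s \<omega> - \<epsilon> 0 \<omega>)"] by (simp add: sums_iff)
      finally have d: "Y' \<omega> - Y \<omega> = a (Suc n) * (\<epsilon>0s \<omega> - \<epsilon> 0 \<omega>)" .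
      show "(rho_w \<gamma> f' (Y \<omega>) (Y' \<omega>))\<^sup>2 \<le> \<kappa> * (a (Suc n))\<^sup>2 * G \<omega>"
        using pointwise_main[OF gamma kappa d] unfolding \<kappa>_def G_def p_def .
    qed
    have "L2sq M (\<lambda>\<omega>. rho_w \<gamma> f' (Y \<omega>) (Y' \<omega>)) \<le> (\<integral>\<^sup>+\<omega>. ennreal (\<kappa> * (a (Suc n))\<^sup>2 * G \<omega>) \<partial>M)"
    proof -
      have "AE \<omega> in M. ennreal ((rho_w \<gamma> f' (Y \<omega>) (Y' \<omega>))\<^sup>2) \<le> ennreal (\<kappa> * (a (Suc n))\<^sup>2 * G \<omega>)"
        using pw by eventually_elim (rule ennreal_leI)
      then show ?thesis unfolding L2sq_def by (rule nn_integral_mono_AE)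
    qed
    also have "\<dots> = ennreal (integral\<^sup>L M (\<lambda>\<omega>. \<kappa> * (a (Suc n))\<^sup>2 * G \<omega>))"
      using iG G0 k0 by (intro nn_integral_eq_integral) auto
    also have "\<dots> = ennreal (\<kappa> * (a (Suc n))\<^sup>2 * integral\<^sup>L M G)" by simp
    also have "\<dots> \<le> ennreal (\<kappa> * (a (Suc n))\<^sup>2 * Bnd)"
      using EG k0 by (intro ennreal_leI mult_left_mono) auto
    also have "\<kappa> * (a (Suc n))\<^sup>2 * Bnd = (Cst * \<bar>a (Suc n)\<bar>)\<^sup>2"
      using k0 Bnd0 by (simp add: Cst_def power_mult_distrib)
    finally show ?thesis by (simp add: Y_def Y'_def Z_def Z'_def)
  qed
  show ?thesis by (intro exI[of _ Cst] always_eventually allI main)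
qed

end
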